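(* Let $f$ be a symmetric probability density on $\mathbb R$ with distribution function $F$ and finite variance $\sigma^2(f)=\int_{\mathbb R}x^2f(x)\,dx>0$. Put $v(x)=\int_{-\infty}^x uf(u)\,du$ and $q(s)=\int_{-\infty}^s v(x)f(x)\,dx$. Then $$\pi^4\Big(\int_{\mathbb R}q^2(s)f(s)\,ds-\Big(\int_{\mathbb R}q(s)f(s)\,ds\Big)^2\Big)=\sigma^2(f)$$ holds if and only if $f$ is a symmetric arcsine density, i.e. $f(x)=\big(\pi\sqrt{c^2-x^2}\big)^{-1}\mathbf 1\{-c<x<c\}$ for some $c>0$. Equivalently, the integrated Watson statistic $\bar U_n^2$ is locally asymptotically optimal in the Bahadur sense under the skew alternative $h(x,\theta)=2f(x)G(\theta x)$ exactly when $f$ is a symmetric arcsine density.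
   Context: With $F_n$ the empirical distribution function and $B_n(x)=\sqrt n\int_{-\infty}^x(F_n(t)-F(t))\,dF(t)$, the statistic is $\bar U_n^2=\int_{\mathbb R}\big(B_n(t)-\int_{\mathbb R}B_n\,dF\big)^2dF(t)$. Its local Bahadur efficiency under the skew alternative equals $\pi^4\big(\int q^2f-(\int qf)^2\big)/\sigma^2(f)$, and local asymptotic optimality means that this efficiency equals $1$. *)

theory Defs
  imports "HOL-Analysis.Analysis"
begin

definition prob_density :: "(real \<Rightarrow> real) \<Rightarrow> bool" where
  "prob_density f \<longleftrightarrow> f \<in> borel_measurable lborel \<and> (\<forall>x. 0 \<le> f x)
     \<and> integrable lborel f \<and> (\<integral>x. f x \<partial>lborel) = 1"

definition symmetric_fun :: "(real \<Rightarrow> real) \<Rightarrow> bool" where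
  "symmetric_fun f \<longleftrightarrow> (\<forall>x. f (- x) = f x)"

definition var_f :: "(real \<Rightarrow> real) \<Rightarrow> real" where
  "var_f f = (\<integral>x. x\<^sup>2 * f x \<partial>lborel)"

definition v_fun :: "(real \<Rightarrow> real) \<Rightarrow> real \<Rightarrow> real" where
  "v_fun f x = (\<integral>u\<in>{..x}. u * f u \<partial>lborel)"

definition q_fun :: "(real \<Rightarrow> real) \<Rightarrow> real \<Rightarrow> real" where
  "q_fun f s = (\<integral>x\<in>{..s}. v_fun f x * f x \<partial>lborel)"

definition arcsine_density :: "real \<Rightarrow> real \<Rightarrow> real" where
  "arcsine_density c x = (if - c < x \<and> x < c then 1 / (pi * sqrt (c\<^sup>2 - x\<^sup>2)) else 0)"

end

theory Submission
  imports Defs "HOL-Probability.Probability"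
begin


lemma left_deriv_zero_const:
  fixes h :: "real \<Rightarrow> real"
  assumes ab: "a \<le> b" and hc: "continuous_on {a..b} h"
    and hd: "\<And>x. x \<in> {a<..b} \<Longrightarrow> (h has_real_derivative 0) (at x within {a..x})"
  shows "h b = h a"
proof -
  have key: "\<bar>h a - h b\<bar> \<le> e * (b - a)" if e: "e > 0" for e
  proof -
    define P where "P y \<longleftrightarrow> \<bar>h y - h b\<bar> \<le> e * (b - y)" for y
    define S where "S = {x \<in> {a..b}. \<forall>y\<in>{x..b}. P y}"
    have bS: "b \<in> S" using ab by (auto simp: S_def P_def)
    have bdd: "bdd_below S" by (auto simp: S_def intro!: bdd_belowI[of _ a])
    define s where "s = Inf S"
    have sb: "s \<le> b" using bS bdd by (simp add: s_def cInf_lower)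
    have as: "a \<le> s" using bS by (auto simp: s_def S_def intro!: cInf_greatest)
    have Py1: "P y" if sy: "s < y" "y \<le> b" for y
    proof -
      obtain x where "x \<in> S" "x < y" using cInf_less_iff[of S y] bdd bS sy by (auto simp: s_def)
      then show ?thesis using sy by (auto simp: S_def)
    qed
    have Ps: "P s"
    proof (cases "s = b")
      case True then show ?thesis by (simp add: P_def)
    next
      case False
      then have sb': "s < b" using sb by simp
      let ?F = "at s within {s<..b}"
      have nt: "?F \<noteq> bot" using sb' by (simp add: at_within_eq_bot_iff)
      have "continuous (at s within {a..b}) h" using hc as sb by (simp add: continuous_on_eq_continuous_within)
      then have "(h \<longlongrightarrow> h s) (at s within {a..b})" by (simp add: continuous_within)
      then have t1: "(h \<longlongrightarrow> h s) ?F" by (rule tendsto_within_subset) (use as in auto)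
      have t2: "((\<lambda>y. \<bar>h y - h b\<bar> - e * (b - y)) \<longlongrightarrow> \<bar>h s - h b\<bar> - e * (b - s)) ?F"
        by (intro tendsto_intros t1)
      have ev: "eventually (\<lambda>y. \<bar>h y - h b\<bar> - e * (b - y) \<le> 0) ?F"
        unfolding eventually_at_filter using Py1 by (auto simp: P_def)
      have "\<bar>h s - h b\<bar> - e * (b - s) \<le> 0" by (rule tendsto_upperbound[OF t2 ev nt])
      then show ?thesis by (simp add: P_def)
    qed
    have "\<forall>y\<in>{s..b}. P y"
    proof
      fix y assume "y \<in> {s..b}"
      then show "P y" using Ps Py1[of y] by (cases "y = s") auto
    qed
    then have sS: "s \<in> S" using as sb by (simp add: S_def)
    have "s = a"
    proof (rule ccontr)
      assume "s \<noteq> a" then have as': "a < s" using as by simp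
      have "(h has_derivative (\<lambda>x. 0 * x)) (at s within {a..s})"
        by (rule hd[of s, unfolded has_field_derivative_def]) (use as' sb in auto)
      then have "\<forall>e>0. \<exists>d>0. \<forall>y\<in>{a..s}. norm (y - s) < d \<longrightarrow> norm (h y - h s - 0 * (y - s)) \<le> e * norm (y - s)"
        unfolding has_derivative_within_alt by blast
      then obtain d where d: "d > 0" and dd0: "\<forall>y\<in>{a..s}. norm (y - s) < d \<longrightarrow> norm (h y - h s - 0 * (y - s)) \<le> e * norm (y - s)"
        using e by blast
      have dd: "\<forall>y\<in>{a..s}. norm (y - s) < d \<longrightarrow> norm (h y - h s) \<le> e * norm (y - s)"
        using dd0 by simp
      define y' where "y' = max a (s - d/2)"
      have y's: "y' < s" using as' d by (simp add: y'_def)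
      have "y' \<in> S"
      proof -
        have "P z" if z: "z \<in> {y'..b}" for z
        proof (cases "z \<ge> s")
          case True then show ?thesis using sS z by (auto simp: S_def)
        next
          case False
          then have zs: "z < s" by simp
          have "z \<in> {a..s}" "norm (z - s) < d" using z zs d by (auto simp: y'_def)
          then have "\<bar>h z - h s\<bar> \<le> e * (s - z)" using dd zs by auto
          moreover have "\<bar>h s - h b\<bar> \<le> e * (b - s)" using Ps by (simp add: P_def)
          moreover have "e * (b - z) = e * (s - z) + e * (b - s)" by (simp add: algebra_simps)
          ultimately show ?thesis unfolding P_def
            using abs_triangle_ineq[of "h z - h s" "h s - h b"] by linarith
        qed
        then show ?thesis using y's sb by (auto simp: S_def y'_def)
      qed
      then have "s \<le> y'" using bdd by (simp add: s_def cInf_lower)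
      then show False using y's by simp
    qed
    then have "P a" using sS by (simp add: S_def)
    then show ?thesis by (simp add: P_def)
  qed
  show ?thesis
  proof (cases "a = b")
    case True then show ?thesis by simp
  next
    case False
    then have ab': "a < b" using ab by simp
    show ?thesis
    proof (rule ccontr)
      assume ne: "h b \<noteq> h a"
      define e where "e = \<bar>h a - h b\<bar> / (2 * (b - a))"
      have e0: "e > 0" using ne ab' by (simp add: e_def)
      have "\<bar>h a - h b\<bar> \<le> e * (b - a)" by (rule key[OF e0])
      also have "\<dots> = \<bar>h a - h b\<bar> / 2" unfolding e_def using ab' by (simp add: field_simps)
      finally show False using ne by simp
    qed
  qed
qed


lemma ftc_left:
  fixes g h :: "real \<Rightarrow> real"
  assumes ab: "a \<le> b"
    and gi: "set_integrable lborel {a..b} g"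
    and gc: "\<And>x. x \<in> {a<..b} \<Longrightarrow> continuous (at x within {a..x}) g"
    and hc: "continuous_on {a..b} h"
    and hd: "\<And>x. x \<in> {a<..b} \<Longrightarrow> (h has_real_derivative g x) (at x within {a..x})"
  shows "(LINT x:{a..b}|lborel. g x) = h b - h a"
proof -
  have gI: "g integrable_on {a..b}" and eq: "(LINT x:{a..b}|lborel. g x) = integral {a..b} g"
    using set_borel_integral_eq_integral[OF gi] by auto
  define H where "H w = h w - integral {a..w} g" for w
  have Hc: "continuous_on {a..b} H" unfolding H_def
    by (intro continuous_on_diff hc indefinite_integral_continuous_1 gI)
  have Hd: "(H has_real_derivative 0) (at x within {a..x})" if x: "x \<in> {a<..b}" for x
  proof -
    have gIx: "g integrable_on {a..x}" by (rule integrable_on_subinterval[OF gI]) (use x in auto)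
    have "((\<lambda>u. integral {a..u} g) has_vector_derivative g x) (at x within {a..x} - {})"
      by (rule integral_has_vector_derivative_continuous_at[OF gIx]) (use x gc[OF x] in auto)
    then have "((\<lambda>u. integral {a..u} g) has_real_derivative g x) (at x within {a..x})"
      by (simp add: has_real_derivative_iff_has_vector_derivative)
    from DERIV_diff[OF hd[OF x] this] show ?thesis by (simp add: H_def[abs_def])
  qed
  have "H b = H a" by (rule left_deriv_zero_const[OF ab Hc Hd])
  then show ?thesis using eq by (simp add: H_def)
qed



lemma cont_mult_integrable:
  fixes g h :: "real \<Rightarrow> real"
  assumes gi: "set_integrable lborel {a..b} g" and hc: "continuous_on {a..b} h"
  shows "set_integrable lborel {a..b} (\<lambda>x. h x * g x)"
proof -
  have "bounded (h ` {a..b})"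
    using compact_imp_bounded[OF compact_continuous_image[OF hc compact_Icc]] .
  then obtain B where B0: "\<forall>y\<in>h ` {a..b}. norm y \<le> B" unfolding bounded_iff by blast
  have B: "\<And>x. x \<in> {a..b} \<Longrightarrow> norm (h x) \<le> B" using B0 by blast
  have m1: "(\<lambda>x. indicator {a..b} x *\<^sub>R h x) \<in> borel_measurable borel"
    by (rule borel_measurable_continuous_on_indicator[OF _ hc]) auto
  have m2: "(\<lambda>x. indicator {a..b} x *\<^sub>R g x) \<in> borel_measurable borel"
    using gi unfolding set_integrable_def by (auto dest: borel_measurable_integrable)
  have "(\<lambda>x. indicator {a..b} x *\<^sub>R (h x * g x)) = (\<lambda>x. (indicator {a..b} x *\<^sub>R h x) * (indicator {a..b} x *\<^sub>R g x))"
    by (auto simp: indicator_def)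
  then have m: "set_borel_measurable lborel {a..b} (\<lambda>x. h x * g x)"
    unfolding set_borel_measurable_def using m1 m2 by (simp add: measurable_lborel1 borel_measurable_times)
  show ?thesis
  proof (rule set_integrable_bound[OF _ m])
    show "set_integrable lborel {a..b} (\<lambda>x. B * g x)" using gi by auto
    show "AE x in lborel. x \<in> {a..b} \<longrightarrow> norm (h x * g x) \<le> norm (B * g x)"
    proof (intro AE_I2 impI)
      fix x assume x: "x \<in> {a..b}"
      have "0 \<le> B" using B[OF x] by (meson norm_ge_zero order.trans)
      then show "norm (h x * g x) \<le> norm (B * g x)"
        using B[OF x] by (simp add: abs_mult mult_right_mono)
    qed
  qed
qed

lemma sq_integral_le:
  fixes G :: "real \<Rightarrow> real"
  assumes pq: "p < q" and i1: "set_integrable lborel {p..q} G"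
    and i2: "set_integrable lborel {p..q} (\<lambda>u. (G u)\<^sup>2)"
  shows "(LINT u:{p..q}|lborel. G u)\<^sup>2 \<le> (q - p) * (LINT u:{p..q}|lborel. (G u)\<^sup>2)"
proof -
  define I where "I = (LINT u:{p..q}|lborel. G u)"
  define m where "m = I / (q - p)"
  have ic: "set_integrable lborel {p..q} (\<lambda>u. c)" for c :: real
    by (rule borel_integrable_atLeastAtMost') auto
  have cst: "(LINT u:{p..q}|lborel. c) = c * (q - p)" for c :: real
    using pq by (subst set_integral_const) auto
  have "0 \<le> (LINT u:{p..q}|lborel. (G u - m)\<^sup>2)"
    unfolding set_lebesgue_integral_def by (rule Bochner_Integration.integral_nonneg) simp
  also have "(LINT u:{p..q}|lborel. (G u - m)\<^sup>2) = (LINT u:{p..q}|lborel. (G u)\<^sup>2 - 2 * m * G u + m\<^sup>2)"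
    by (simp add: power2_diff algebra_simps)
  also have "\<dots> = (LINT u:{p..q}|lborel. (G u)\<^sup>2) - 2 * m * I + m\<^sup>2 * (q - p)"
    using i1 i2 ic by (simp add: set_integral_diff set_integral_add cst I_def)
  also have "\<dots> = (LINT u:{p..q}|lborel. (G u)\<^sup>2) - I\<^sup>2 / (q - p)"
  proof -
    define d where "d = q - p"
    have d: "d \<noteq> 0" using pq by (simp add: d_def)
    have "- 2 * m * I + m\<^sup>2 * d = - I\<^sup>2 / d" using d by (simp add: m_def d_def[symmetric] field_simps power2_eq_square)
    then show ?thesis by (simp add: d_def)
  qed
  finally have "I\<^sup>2 / (q - p) \<le> (LINT u:{p..q}|lborel. (G u)\<^sup>2)" by simp
  then show ?thesis using pq by (simp add: I_def field_simps)
qed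

lemma x_cos_le_sin:
  fixes x :: real
  assumes "0 \<le> x" "x \<le> pi / 2"
  shows "x * cos x \<le> sin x"
proof -
  have "(\<lambda>t. sin t - t * cos t) 0 \<le> (\<lambda>t. sin t - t * cos t) x"
  proof (rule DERIV_nonneg_imp_nondecreasing[of 0 x])
    fix t assume t: "0 \<le> t" "t \<le> x"
    show "\<exists>y. ((\<lambda>t. sin t - t * cos t) has_real_derivative y) (at t) \<and> 0 \<le> y"
    proof (intro exI conjI)
      show "((\<lambda>t. sin t - t * cos t) has_real_derivative t * sin t) (at t)"
        by (auto intro!: derivative_eq_intros)
      have "0 \<le> sin t" using t assms by (intro sin_ge_zero) auto
      then show "0 \<le> t * sin t" using t by simp
    qed
  qed (use assms in auto)
  then show ?thesis by simp
qed

lemma indef_integral: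
  fixes h :: "real \<Rightarrow> real"
  assumes hi: "set_integrable lborel {0..1} h"
  shows "continuous_on {0..1} (\<lambda>t. LINT x:{0..t}|lborel. h x)"
    and "\<And>c d. 0 \<le> c \<Longrightarrow> c \<le> d \<Longrightarrow> d \<le> 1 \<Longrightarrow>
        (LINT x:{c..d}|lborel. h x) = (LINT x:{0..d}|lborel. h x) - (LINT x:{0..c}|lborel. h x)"
    and "\<And>c d. 0 \<le> c \<Longrightarrow> d \<le> 1 \<Longrightarrow> set_integrable lborel {c..d} h"
proof -
  have hI: "h integrable_on {0..1}" using set_borel_integral_eq_integral(1)[OF hi] .
  have sub: "set_integrable lborel {c..d} h" if "0 \<le> c" "d \<le> 1" for c d
    by (rule set_integrable_subset[OF hi]) (use that in auto)
  then show "\<And>c d. 0 \<le> c \<Longrightarrow> d \<le> 1 \<Longrightarrow> set_integrable lborel {c..d} h" .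
  have conv: "(LINT x:{c..d}|lborel. h x) = integral {c..d} h" if "0 \<le> c" "d \<le> 1" for c d
    using set_borel_integral_eq_integral(2)[OF sub[OF that]] .
  have "continuous_on {0..1} (\<lambda>t. integral {0..t} h)" by (rule indefinite_integral_continuous_1[OF hI])
  then show "continuous_on {0..1} (\<lambda>t. LINT x:{0..t}|lborel. h x)"
    by (rule continuous_on_eq) (auto simp: conv)
  fix c d :: real assume cd: "0 \<le> c" "c \<le> d" "d \<le> 1"
  have "h integrable_on {0..d}" by (rule integrable_on_subinterval[OF hI]) (use cd in auto)
  from Henstock_Kurzweil_Integration.integral_combine[OF _ _ this, of c] cd
  have "integral {0..c} h + integral {c..d} h = integral {0..d} h" by auto
  then show "(LINT x:{c..d}|lborel. h x) = (LINT x:{0..d}|lborel. h x) - (LINT x:{0..c}|lborel. h x)"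
    using cd by (simp add: conv)
qed

lemma aux_trig: "(s::real) * s + c * c = 1 \<Longrightarrow> p * (s * s) = p * (c * (c * (s * s))) + p * (s * (s * (s * s)))"
proof -
  assume h: "s * s + c * c = 1"
  have "p * (c * (c * (s * s))) + p * (s * (s * (s * s))) = p * (s * s) * (s * s + c * c)" by (simp add: algebra_simps)
  then show ?thesis using h by simp
qed
lemma deriv_c:
  fixes x :: real
  assumes "sin (pi * x) \<noteq> 0"
  shows "((\<lambda>u. cos (pi * u) / sin (pi * u)) has_real_derivative - pi / (sin (pi * x))\<^sup>2) (at x within S)"
  using assms
  apply (auto intro!: derivative_eq_intros simp: field_simps power2_eq_square)
  apply (rule aux_trig)
  using sin_cos_squared_add[of "pi * x"] by (simp add: power2_eq_square)

lemma alg_ident: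
  fixes s co G V :: real
  assumes s: "s \<noteq> 0" and h: "co * co + s * s = 1"
  shows "(G - pi * V * (co / s))\<^sup>2 = G\<^sup>2 - pi\<^sup>2 * V\<^sup>2 - pi * (2 * V * (co / s) * G - pi * V\<^sup>2 / s\<^sup>2)"
proof -
  have e1: "(G - pi * V * (co / s))\<^sup>2 = G\<^sup>2 - 2 * pi * V * G * co / s + pi\<^sup>2 * V\<^sup>2 * (co * co) / (s * s)"
    using s by (simp add: field_simps power2_eq_square)
  have e2: "G\<^sup>2 - pi\<^sup>2 * V\<^sup>2 - pi * (2 * V * (co / s) * G - pi * V\<^sup>2 / s\<^sup>2) =
     G\<^sup>2 - 2 * pi * V * G * co / s + pi\<^sup>2 * V\<^sup>2 * (1 - s * s) / (s * s)"
    using s by (simp add: field_simps power2_eq_square)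
  have "co * co = 1 - s * s" using h by simp
  then show ?thesis using e1 e2 by simp
qed



lemma wirtinger:
  fixes G :: "real \<Rightarrow> real"
  assumes Gm: "G \<in> borel_measurable borel"
    and G1: "set_integrable lborel {0..1} G"
    and G2: "set_integrable lborel {0..1} (\<lambda>u. (G u)\<^sup>2)"
    and Gc: "\<And>x. x \<in> {0<..<1} \<Longrightarrow> continuous (at x within {0..x}) G"
    and G0: "(LINT u:{0..1}|lborel. G u) = 0"
  defines "V \<equiv> \<lambda>w. LINT u:{0..max 0 (min w 1)}|lborel. G u"
  shows "pi\<^sup>2 * (LINT u:{0..1}|lborel. (V u)\<^sup>2) \<le> (LINT u:{0..1}|lborel. (G u)\<^sup>2)"
    and "pi\<^sup>2 * (LINT u:{0..1}|lborel. (V u)\<^sup>2) = (LINT u:{0..1}|lborel. (G u)\<^sup>2) \<Longrightarrow>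
         \<exists>k. AE u in lborel. u \<in> {0<..<1} \<longrightarrow> G u = k * cos (pi * u)"
proof -
  note ind = indef_integral[OF G1]
  note ind2 = indef_integral[OF G2]
  have Vw: "V w = (LINT u:{0..w}|lborel. G u)" if "0 \<le> w" "w \<le> 1" for w
    using that by (simp add: V_def)
  have Vcont: "continuous_on UNIV V"
  proof -
    have "continuous_on UNIV ((\<lambda>t. LINT u:{0..t}|lborel. G u) \<circ> (\<lambda>w. max 0 (min w 1)))"
      by (rule continuous_on_compose[OF _ continuous_on_subset[OF ind(1)]])
         (auto intro!: continuous_intros)
    then show ?thesis by (simp add: V_def o_def)
  qed
  have VcS[continuous_intros]: "continuous_on S V" for S using Vcont by (rule continuous_on_subset) auto
  have Visc: "isCont V x" for x using Vcont by (simp add: continuous_on_eq_continuous_at)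
  have Vm: "V \<in> borel_measurable borel" using Vcont by (rule borel_measurable_continuous_onI)
  have V0: "V 0 = 0" using ind(2)[of 0 0] by (simp add: V_def)
  have V1: "V 1 = 0" using G0 by (simp add: V_def)
  have Vd: "(V has_real_derivative G x) (at x within {a..x})" if x: "x \<in> {0<..<1}" "0 \<le> a" for x a
  proof -
    have G1x: "G integrable_on {0..x}" using set_borel_integral_eq_integral(1)[OF ind(3)[of 0 x]] x by auto
    have "((\<lambda>u. integral {0..u} G) has_vector_derivative G x) (at x within {0..x} - {})"
      by (rule integral_has_vector_derivative_continuous_at[OF G1x]) (use x Gc[of x] in auto)
    then have "((\<lambda>u. integral {0..u} G) has_real_derivative G x) (at x within {0..x})"
      by (simp add: has_real_derivative_iff_has_vector_derivative)
    then have "(V has_real_derivative G x) (at x within {0..x})"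
    proof (rule has_field_derivative_transform_within[of _ _ _ _ 1])
      fix u assume u: "u \<in> {0..x}"
      then show "integral {0..u} G = V u"
        using x set_borel_integral_eq_integral(2)[OF ind(3)[of 0 u]] by (simp add: Vw)
    qed (use x in auto)
    then show ?thesis by (rule DERIV_subset) (use x in auto)
  qed
  have V2i: "set_integrable lborel {c..d} (\<lambda>u. (V u)\<^sup>2)" for c d
    by (rule borel_integrable_atLeastAtMost') (auto intro!: continuous_intros)
  define a :: "nat \<Rightarrow> real" where "a n = 1 / (real n + 4)" for n
  define b :: "nat \<Rightarrow> real" where "b n = 1 - a n" for n
  define c where "c u = cos (pi * u) / sin (pi * u)" for u
  define \<phi> where "\<phi> u = (V u)\<^sup>2 * c u" for u
  define Q where "Q p q = (LINT u:{p..q}|lborel. (G u - pi * V u * c u)\<^sup>2)" for p q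
  have ident: "Q p q = (LINT u:{p..q}|lborel. (G u)\<^sup>2) - pi\<^sup>2 * (LINT u:{p..q}|lborel. (V u)\<^sup>2) - pi * (\<phi> q - \<phi> p)"
    if pq: "0 < p" "p \<le> q" "q < 1" for p q
  proof -
    have sinpos: "sin (pi * u) > 0" if "u \<in> {p..q}" for u
    proof -
      have "0 < pi * u" using that pq by simp
      moreover have "pi * u < pi" using that pq by simp
      ultimately show ?thesis by (intro sin_gt_zero)
    qed
    have sinpos': "sin (pi * u) > 0" if "0 < u" "u < 1" for u
    proof -
      have "0 < pi * u" using that by simp
      moreover have "pi * u < pi" using that by simp
      ultimately show ?thesis by (intro sin_gt_zero)
    qed
    define g where "g u = 2 * V u * c u * G u - pi * (V u)\<^sup>2 / (sin (pi * u))\<^sup>2" for u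
    have cc: "continuous_on {p..q} c" unfolding c_def[abs_def]
      using sinpos by (intro continuous_intros) (auto simp: less_imp_neq[symmetric] dest: sinpos)
    have t1: "set_integrable lborel {p..q} (\<lambda>u. (2 * V u * c u) * G u)"
      by (rule cont_mult_integrable[OF ind(3)]) (use pq in \<open>auto intro!: continuous_intros cc\<close>)
    have t2: "set_integrable lborel {p..q} (\<lambda>u. pi * (V u)\<^sup>2 / (sin (pi * u))\<^sup>2)"
      by (rule borel_integrable_atLeastAtMost') (auto intro!: continuous_intros dest: sinpos)
    have gi: "set_integrable lborel {p..q} g" unfolding g_def[abs_def]
      using set_integral_diff(1)[OF t1 t2] by simp
    have gc: "continuous (at x within {p..x}) g" if x: "x \<in> {p<..q}" for x
    proof -
      have x01: "0 < x" "x < 1" using x pq by auto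
      have Gx: "continuous (at x within {p..x}) G"
        by (rule continuous_within_subset[OF Gc]) (use x01 pq in auto)
      have "isCont (\<lambda>u. 2 * V u * c u) x" unfolding c_def[abs_def]
        using sinpos'[OF x01] by (intro continuous_intros Visc) auto
      then have c1: "continuous (at x within {p..x}) (\<lambda>u. 2 * V u * c u)"
        by (rule continuous_at_imp_continuous_within)
      have "isCont (\<lambda>u. pi * (V u)\<^sup>2 / (sin (pi * u))\<^sup>2) x"
        using sinpos'[OF x01] by (intro continuous_intros Visc) auto
      then have c2: "continuous (at x within {p..x}) (\<lambda>u. pi * (V u)\<^sup>2 / (sin (pi * u))\<^sup>2)"
        by (rule continuous_at_imp_continuous_within)
      show ?thesis unfolding g_def[abs_def] by (intro continuous_intros c1 c2 Gx)
    qed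
    have phic: "continuous_on {p..q} \<phi>" unfolding \<phi>_def[abs_def]
      by (intro continuous_intros cc)
    have phid: "(\<phi> has_real_derivative g x) (at x within {p..x})" if x: "x \<in> {p<..q}" for x
    proof -
      have x01: "x \<in> {0<..<1}" using x pq by auto
      have sx: "sin (pi * x) \<noteq> 0" using sinpos'[of x] x01 by auto
      have "((\<lambda>u. (V u)\<^sup>2 * (cos (pi * u) / sin (pi * u))) has_real_derivative
          of_nat 2 * (G x * V x ^ (2 - Suc 0)) * (cos (pi * x) / sin (pi * x)) + (- pi / (sin (pi * x))\<^sup>2) * (V x)\<^sup>2)
          (at x within {p..x})"
        by (rule DERIV_mult[OF DERIV_power[OF Vd[OF x01]] deriv_c[OF sx]]) (use pq in auto)
      then show ?thesis unfolding \<phi>_def[abs_def] c_def[abs_def]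
        by (rule DERIV_cong) (simp add: g_def c_def algebra_simps)
    qed
    have F: "(LINT u:{p..q}|lborel. g u) = \<phi> q - \<phi> p"
      by (rule ftc_left[OF pq(2) gi gc phic phid])
    have pw: "(G u - pi * V u * c u)\<^sup>2 = (G u)\<^sup>2 - pi\<^sup>2 * (V u)\<^sup>2 - pi * g u" if u: "u \<in> {p..q}" for u
      unfolding g_def c_def
      by (rule alg_ident) (use sinpos[OF u] sin_cos_squared_add[of "pi * u"] in \<open>auto simp: power2_eq_square\<close>)
    have Gi: "set_integrable lborel {p..q} (\<lambda>u. (G u)\<^sup>2)" using ind2(3) pq by simp
    have Vi: "set_integrable lborel {p..q} (\<lambda>u. pi\<^sup>2 * (V u)\<^sup>2)" using V2i by simp
    have gi': "set_integrable lborel {p..q} (\<lambda>u. pi * g u)" using gi by simp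
    have "Q p q = (LINT u:{p..q}|lborel. (G u)\<^sup>2 - pi\<^sup>2 * (V u)\<^sup>2 - pi * g u)"
      unfolding Q_def by (rule set_lebesgue_integral_cong) (auto simp: pw)
    also have "\<dots> = (LINT u:{p..q}|lborel. (G u)\<^sup>2) - pi\<^sup>2 * (LINT u:{p..q}|lborel. (V u)\<^sup>2) - pi * (LINT u:{p..q}|lborel. g u)"
      using set_integral_diff(2)[OF set_integral_diff(1)[OF Gi Vi] gi'] set_integral_diff(2)[OF Gi Vi] by simp
    finally show ?thesis using F by simp
  qed
  have phi_a: "\<bar>\<phi> p\<bar> \<le> (LINT u:{0..p}|lborel. (G u)\<^sup>2) / pi" if p: "0 < p" "p \<le> 1/2" for p
  proof -
    define S where "S = (LINT u:{0..p}|lborel. (G u)\<^sup>2)"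
    have h1: "0 < pi * p" using p by simp
    have h2: "pi * p \<le> pi / 2" using mult_left_mono[of p "1/2" pi] p by simp
    have sp: "sin (pi * p) > 0" using h1 h2 pi_gt_zero by (intro sin_gt_zero) linarith+
    have cp: "cos (pi * p) \<ge> 0" using h1 h2 pi_gt_zero by (intro cos_ge_zero) linarith+
    have "pi * p * cos (pi * p) \<le> sin (pi * p)" using h1 h2 by (intro x_cos_le_sin) linarith+
    then have c1: "c p \<le> 1 / (pi * p)" using sp p by (simp add: c_def field_simps)
    have c0: "0 \<le> c p" using sp cp by (simp add: c_def)
    have V2: "(V p)\<^sup>2 \<le> p * S"
      using sq_integral_le[of 0 p G, OF p(1) ind(3) ind2(3)] p by (simp add: Vw S_def)
    have "\<bar>\<phi> p\<bar> = (V p)\<^sup>2 * c p" using c0 by (simp add: \<phi>_def abs_mult)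
    also have "\<dots> \<le> (p * S) * (1 / (pi * p))" by (intro mult_mono V2 c1 c0 order_trans[OF zero_le_power2 V2])
    also have "\<dots> = S / pi" using p by simp
    finally show ?thesis by (simp add: S_def)
  qed
  have phi_b: "\<bar>\<phi> q\<bar> \<le> (LINT u:{q..1}|lborel. (G u)\<^sup>2) / pi" if q: "1/2 \<le> q" "q < 1" for q
  proof -
    define S where "S = (LINT u:{q..1}|lborel. (G u)\<^sup>2)"
    define r where "r = 1 - q"
    have r: "0 < r" "r \<le> 1/2" using q by (auto simp: r_def)
    have sq: "sin (pi * q) = sin (pi * r)" by (simp add: r_def right_diff_distrib sin_diff)
    have cq: "cos (pi * q) = - cos (pi * r)" by (simp add: r_def right_diff_distrib cos_diff)
    have h1: "0 < pi * r" using r by simp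
    have h2: "pi * r \<le> pi / 2" using mult_left_mono[of r "1/2" pi] r by simp
    have sp: "sin (pi * r) > 0" using h1 h2 pi_gt_zero by (intro sin_gt_zero) linarith+
    have cp: "cos (pi * r) \<ge> 0" using h1 h2 pi_gt_zero by (intro cos_ge_zero) linarith+
    have "pi * r * cos (pi * r) \<le> sin (pi * r)" using h1 h2 by (intro x_cos_le_sin) linarith+
    then have c1: "\<bar>c q\<bar> \<le> 1 / (pi * r)" using sp cp r by (simp add: c_def sq cq field_simps)
    have Vq: "V q = - (LINT u:{q..1}|lborel. G u)"
      using ind(2)[of q 1] q G0 by (simp add: Vw)
    have V2: "(V q)\<^sup>2 \<le> r * S"
      using sq_integral_le[of q 1 G, OF _ ind(3) ind2(3)] q by (simp add: Vq S_def r_def)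
    have "\<bar>\<phi> q\<bar> = (V q)\<^sup>2 * \<bar>c q\<bar>" by (simp add: \<phi>_def abs_mult)
    also have "\<dots> \<le> (r * S) * (1 / (pi * r))" by (intro mult_mono V2 c1 abs_ge_zero order_trans[OF zero_le_power2 V2])
    also have "\<dots> = S / pi" using r by simp
    finally show ?thesis by (simp add: S_def)
  qed
  have lim_a: "a \<longlonglongrightarrow> 0"
  proof -
    have "filterlim (\<lambda>n. real n + 4) at_top sequentially"
      using filterlim_tendsto_add_at_top[OF tendsto_const[of 4] filterlim_real_sequentially]
      by (simp add: add.commute)
    then have "filterlim (\<lambda>n. real n + 4) at_infinity sequentially"
      by (rule filterlim_at_top_imp_at_infinity)
    then show ?thesis unfolding a_def[abs_def] by (rule tendsto_divide_0[OF tendsto_const])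
  qed
  have lim_b: "b \<longlonglongrightarrow> 1"
    unfolding b_def[abs_def] using tendsto_diff[OF tendsto_const[of 1] lim_a] by simp
  have ab: "0 < a n" "a n \<le> 1/4" "3/4 \<le> b n" "b n < 1" for n
    by (auto simp: a_def b_def field_simps)
  have limQ: "(\<lambda>n. Q (a n) (b n)) \<longlonglongrightarrow> (LINT u:{0..1}|lborel. (G u)\<^sup>2) - pi\<^sup>2 * (LINT u:{0..1}|lborel. (V u)\<^sup>2)"
  proof -
    have lim_int: "(\<lambda>n. LINT u:{a n..b n}|lborel. h u) \<longlonglongrightarrow> (LINT u:{0..1}|lborel. h u)"
      and lim0: "(\<lambda>n. LINT u:{0..a n}|lborel. h u) \<longlonglongrightarrow> 0"
      and lim1: "(\<lambda>n. LINT u:{b n..1}|lborel. h u) \<longlonglongrightarrow> 0"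
      if hi: "set_integrable lborel {0..1} h" for h :: "real \<Rightarrow> real"
    proof -
      note hh = indef_integral[OF hi]
      define \<Phi> where "\<Phi> t = (LINT u:{0..t}|lborel. h u)" for t
      have P0: "\<Phi> 0 = 0" using hh(2)[of 0 0] by (simp add: \<Phi>_def)
      have ev: "\<forall>\<^sub>F n in sequentially. a n \<in> {0..1}" "\<forall>\<^sub>F n in sequentially. b n \<in> {0..1}"
      proof -
        have "a n \<in> {0..1}" "b n \<in> {0..1}" for n using ab[of n] by auto
        then show "\<forall>\<^sub>F n in sequentially. a n \<in> {0..1}" "\<forall>\<^sub>F n in sequentially. b n \<in> {0..1}"
          by (auto intro: always_eventually)
      qed
      have la: "(\<lambda>n. \<Phi> (a n)) \<longlonglongrightarrow> \<Phi> 0"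
        using continuous_on_tendsto_compose[OF hh(1) lim_a _ ev(1)] by (simp add: \<Phi>_def o_def)
      have lb: "(\<lambda>n. \<Phi> (b n)) \<longlonglongrightarrow> \<Phi> 1"
        using continuous_on_tendsto_compose[OF hh(1) lim_b _ ev(2)] by (simp add: \<Phi>_def o_def)
      have e1: "(LINT u:{a n..b n}|lborel. h u) = \<Phi> (b n) - \<Phi> (a n)" for n
        using hh(2)[of "a n" "b n"] ab[of n] by (simp add: \<Phi>_def)
      have e2: "(LINT u:{b n..1}|lborel. h u) = \<Phi> 1 - \<Phi> (b n)" for n
        using hh(2)[of "b n" 1] ab[of n] by (simp add: \<Phi>_def)
      show "(\<lambda>n. LINT u:{a n..b n}|lborel. h u) \<longlonglongrightarrow> (LINT u:{0..1}|lborel. h u)"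
        unfolding e1 using tendsto_diff[OF lb la] P0 by (simp add: \<Phi>_def)
      show "(\<lambda>n. LINT u:{0..a n}|lborel. h u) \<longlonglongrightarrow> 0"
        using la P0 by (simp add: \<Phi>_def)
      show "(\<lambda>n. LINT u:{b n..1}|lborel. h u) \<longlonglongrightarrow> 0"
        unfolding e2 using tendsto_diff[OF tendsto_const[of "\<Phi> 1"] lb] by simp
    qed
    have pa: "(\<lambda>n. \<phi> (a n)) \<longlonglongrightarrow> 0"
    proof (rule Lim_null_comparison)
      show "\<forall>\<^sub>F n in sequentially. norm (\<phi> (a n)) \<le> (LINT u:{0..a n}|lborel. (G u)\<^sup>2) / pi"
      proof (intro always_eventually allI)
        fix n
        have "\<bar>\<phi> (a n)\<bar> \<le> (LINT u:{0..a n}|lborel. (G u)\<^sup>2) / pi" by (rule phi_a) (use ab[of n] in auto)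
        then show "norm (\<phi> (a n)) \<le> (LINT u:{0..a n}|lborel. (G u)\<^sup>2) / pi" by simp
      qed
      show "(\<lambda>n. (LINT u:{0..a n}|lborel. (G u)\<^sup>2) / pi) \<longlonglongrightarrow> 0"
        using tendsto_divide[OF lim0[OF ind2(3)[of 0 1]] tendsto_const[of pi]] by simp
    qed
    have pb: "(\<lambda>n. \<phi> (b n)) \<longlonglongrightarrow> 0"
    proof (rule Lim_null_comparison)
      show "\<forall>\<^sub>F n in sequentially. norm (\<phi> (b n)) \<le> (LINT u:{b n..1}|lborel. (G u)\<^sup>2) / pi"
      proof (intro always_eventually allI)
        fix n
        have "\<bar>\<phi> (b n)\<bar> \<le> (LINT u:{b n..1}|lborel. (G u)\<^sup>2) / pi" by (rule phi_b) (use ab[of n] in auto)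
        then show "norm (\<phi> (b n)) \<le> (LINT u:{b n..1}|lborel. (G u)\<^sup>2) / pi" by simp
      qed
      show "(\<lambda>n. (LINT u:{b n..1}|lborel. (G u)\<^sup>2) / pi) \<longlonglongrightarrow> 0"
        using tendsto_divide[OF lim1[OF ind2(3)[of 0 1]] tendsto_const[of pi]] by simp
    qed
    have eqQ: "Q (a n) (b n) = (LINT u:{a n..b n}|lborel. (G u)\<^sup>2) - pi\<^sup>2 * (LINT u:{a n..b n}|lborel. (V u)\<^sup>2)
        - pi * (\<phi> (b n) - \<phi> (a n))" for n
      using ident[of "a n" "b n"] ab[of n] by simp
    show ?thesis unfolding eqQ
      using tendsto_diff[OF tendsto_diff[OF lim_int[OF ind2(3)[of 0 1]] tendsto_mult[OF tendsto_const lim_int[OF V2i[of 0 1]]]]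
          tendsto_mult[OF tendsto_const tendsto_diff[OF pb pa]], of "pi\<^sup>2" pi] by simp
  qed
  have Qnn: "0 \<le> Q p q" for p q
    unfolding Q_def set_lebesgue_integral_def by (rule Bochner_Integration.integral_nonneg) simp
  show "pi\<^sup>2 * (LINT u:{0..1}|lborel. (V u)\<^sup>2) \<le> (LINT u:{0..1}|lborel. (G u)\<^sup>2)"
    using LIMSEQ_le_const[OF limQ, of 0] Qnn by auto
  assume eq: "pi\<^sup>2 * (LINT u:{0..1}|lborel. (V u)\<^sup>2) = (LINT u:{0..1}|lborel. (G u)\<^sup>2)"
  have lim0: "(\<lambda>n. Q (a n) (b n)) \<longlonglongrightarrow> 0" using limQ eq by simp
  have sinpos: "sin (pi * u) > 0" if "0 < u" "u < 1" for u
  proof -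
    have "0 < pi * u" using that by simp
    moreover have "pi * u < pi" using that by simp
    ultimately show ?thesis by (intro sin_gt_zero)
  qed
  have nz: "sin (pi * u) \<noteq> 0" if "u \<in> {p..q}" "0 < p" "q < 1" for u p q
    using sinpos[of u] that by auto
  have ccont: "continuous_on {p..q} c" if "0 < p" "q < 1" for p q
    unfolding c_def[abs_def] using nz that by (intro continuous_intros) auto
  define F where "F u = (G u - pi * V u * c u)\<^sup>2" for u
  have Qi: "set_integrable lborel {p..q} F" if pq: "0 < p" "q < 1" for p q
  proof -
    have i1: "set_integrable lborel {p..q} (\<lambda>u. (G u)\<^sup>2)" using ind2(3) pq by simp
    have i2: "set_integrable lborel {p..q} (\<lambda>u. (-2 * pi * V u * c u) * G u)"
      by (rule cont_mult_integrable[OF ind(3)]) (use pq in \<open>auto intro!: continuous_intros ccont\<close>)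
    have i3: "set_integrable lborel {p..q} (\<lambda>u. (pi * V u * c u)\<^sup>2)"
      by (rule borel_integrable_atLeastAtMost') (use pq in \<open>auto intro!: continuous_intros ccont\<close>)
    have "set_integrable lborel {p..q} (\<lambda>u. (G u)\<^sup>2 + ((-2 * pi * V u * c u) * G u + (pi * V u * c u)\<^sup>2))"
      by (intro set_integral_add(1) i1 i2 i3)
    moreover have "(\<lambda>u. (G u)\<^sup>2 + ((-2 * pi * V u * c u) * G u + (pi * V u * c u)\<^sup>2)) = F"
      by (auto simp: F_def power2_diff algebra_simps)
    ultimately show ?thesis by simp
  qed
  have Fnn: "0 \<le> F u" for u by (simp add: F_def)
  have Qmono: "Q (a n) (b n) \<le> Q (a m) (b m)" if nm: "n \<le> m" for n m
  proof -
    have am: "a m \<le> a n" using nm by (simp add: a_def frac_le)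
    have bm: "b n \<le> b m" using am by (simp add: b_def)
    show ?thesis unfolding Q_def F_def[symmetric] set_lebesgue_integral_def
    proof (rule integral_mono)
      show "integrable lborel (\<lambda>x. indicat_real {a n..b n} x *\<^sub>R F x)"
        using Qi[of "a n" "b n"] ab[of n] unfolding set_integrable_def by auto
      show "integrable lborel (\<lambda>x. indicat_real {a m..b m} x *\<^sub>R F x)"
        using Qi[of "a m" "b m"] ab[of m] unfolding set_integrable_def by auto
      fix x show "indicat_real {a n..b n} x *\<^sub>R F x \<le> indicat_real {a m..b m} x *\<^sub>R F x"
        using am bm Fnn[of x] by (auto simp: indicator_def)
    qed
  qed
  have Q0: "Q (a n) (b n) = 0" for n
  proof -
    have "Q (a n) (b n) \<le> 0"
      by (rule LIMSEQ_le_const[OF lim0]) (use Qmono in blast)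
    then show ?thesis using Qnn[of "a n" "b n"] by simp
  qed
  have AEn: "AE u in lborel. u \<in> {a n..b n} \<longrightarrow> F u = 0" for n
  proof -
    have int: "integrable lborel (\<lambda>x. indicat_real {a n..b n} x *\<^sub>R F x)"
      using Qi[of "a n" "b n"] ab[of n] unfolding set_integrable_def by auto
    have "integral\<^sup>L lborel (\<lambda>x. indicat_real {a n..b n} x *\<^sub>R F x) = 0"
      using Q0[of n] unfolding Q_def F_def[symmetric] set_lebesgue_integral_def .
    then have "AE x in lborel. indicat_real {a n..b n} x *\<^sub>R F x = 0"
      using integral_nonneg_eq_0_iff_AE[OF int] Fnn by (simp add: indicator_def)
    then show ?thesis by eventually_elim (auto simp: indicator_def)
  qed
  have AEall: "AE u in lborel. \<forall>n. u \<in> {a n..b n} \<longrightarrow> F u = 0"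
    unfolding AE_all_countable using AEn by blast
  have AEG: "AE u in lborel. u \<in> {0<..<1} \<longrightarrow> G u = pi * V u * c u"
    using AEall
  proof eventually_elim
    case (elim u)
    show ?case
    proof
      assume u: "u \<in> {0<..<1}"
      have "\<forall>\<^sub>F n in sequentially. a n < u \<and> u < b n"
        using order_tendstoD(2)[OF lim_a, of u] order_tendstoD(1)[OF lim_b, of u] u
        by (auto intro: eventually_conj)
      then obtain N where "\<forall>n\<ge>N. a n < u \<and> u < b n" unfolding eventually_sequentially by blast
      then have "a N < u" "u < b N" by auto
      then have "F u = 0" using elim[rule_format, of N] by auto
      then show "G u = pi * V u * c u" by (simp add: F_def)
    qed
  qed
  define \<psi> where "\<psi> u = V u / sin (pi * u)" for u
  have Gmeas[measurable]: "G \<in> borel_measurable lborel" using Gm by (simp add: measurable_lborel1)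
  have Vmeas[measurable]: "V \<in> borel_measurable lborel" using Vm by (simp add: measurable_lborel1)
  have psi_step: "\<psi> q = \<psi> p" if pq: "0 < p" "p \<le> q" "q < 1" for p q
  proof -
    define g2 where "g2 u = (G u - pi * V u * c u) / sin (pi * u)" for u
    have g2i: "set_integrable lborel {p..q} g2"
    proof -
      have i1: "set_integrable lborel {p..q} (\<lambda>u. (1 / sin (pi * u)) * G u)"
        by (rule cont_mult_integrable[OF ind(3)]) (use pq nz in \<open>auto intro!: continuous_intros\<close>)
      have i2: "set_integrable lborel {p..q} (\<lambda>u. pi * V u * c u / sin (pi * u))"
        by (rule borel_integrable_atLeastAtMost') (use pq nz in \<open>auto intro!: continuous_intros ccont\<close>)
      have "(\<lambda>u. (1 / sin (pi * u)) * G u - pi * V u * c u / sin (pi * u)) = g2"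
        by (auto simp: g2_def diff_divide_distrib)
      then show ?thesis using set_integral_diff(1)[OF i1 i2] by simp
    qed
    have g2c: "continuous (at x within {p..x}) g2" if x: "x \<in> {p<..q}" for x
    proof -
      have x01: "0 < x" "x < 1" using x pq by auto
      have Gx: "continuous (at x within {p..x}) G"
        by (rule continuous_within_subset[OF Gc]) (use x01 pq in auto)
      have "isCont (\<lambda>u. pi * V u * c u) x" unfolding c_def[abs_def]
        using sinpos[OF x01] by (intro continuous_intros Visc) auto
      then have c1: "continuous (at x within {p..x}) (\<lambda>u. pi * V u * c u)"
        by (rule continuous_at_imp_continuous_within)
      have "isCont (\<lambda>u. sin (pi * u)) x" by (intro continuous_intros)
      then have c2: "continuous (at x within {p..x}) (\<lambda>u. sin (pi * u))"
        by (rule continuous_at_imp_continuous_within)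
      show ?thesis unfolding g2_def[abs_def] using sinpos[OF x01]
        by (intro continuous_intros c1 c2 Gx) auto
    qed
    have psic: "continuous_on {p..q} \<psi>" unfolding \<psi>_def[abs_def]
      using pq nz by (intro continuous_intros) auto
    have psid: "(\<psi> has_real_derivative g2 x) (at x within {p..x})" if x: "x \<in> {p<..q}" for x
    proof -
      have x01: "x \<in> {0<..<1}" using x pq by auto
      have sx: "sin (pi * x) \<noteq> 0" using sinpos[of x] x01 by auto
      have ds: "((\<lambda>u. sin (pi * u)) has_real_derivative cos (pi * x) * pi) (at x within {p..x})"
        by (auto intro!: derivative_eq_intros)
      show ?thesis unfolding \<psi>_def[abs_def]
        by (rule DERIV_cong[OF DERIV_divide[OF Vd[OF x01] ds sx]])
           (use sx pq in \<open>simp_all add: g2_def c_def field_simps power2_eq_square\<close>)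
    qed
    have F: "(LINT u:{p..q}|lborel. g2 u) = \<psi> q - \<psi> p"
      by (rule ftc_left[OF pq(2) g2i g2c psic psid])
    have "(LINT u:{p..q}|lborel. g2 u) = (LINT u:{p..q}|lborel. 0)"
    proof (rule set_lebesgue_integral_cong_AE)
      show "g2 \<in> borel_measurable lborel" unfolding g2_def[abs_def] c_def[abs_def] by measurable
      show "AE x\<in>{p..q} in lborel. g2 x = 0" using AEG
        by eventually_elim (use pq in \<open>auto simp: g2_def\<close>)
    qed auto
    then show ?thesis using F by simp
  qed
  define k' where "k' = \<psi> (1/2)"
  have Vk: "V u = k' * sin (pi * u)" if u: "0 < u" "u < 1" for u
  proof -
    have "\<psi> u = k'"
    proof (cases "u \<le> 1/2")
      case True then show ?thesis using psi_step[of u "1/2"] u by (simp add: k'_def)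
    next
      case False then show ?thesis using psi_step[of "1/2" u] u by (simp add: k'_def)
    qed
    then show ?thesis using sinpos[OF u] by (simp add: \<psi>_def field_simps)
  qed
  show "\<exists>k. AE u in lborel. u \<in> {0<..<1} \<longrightarrow> G u = k * cos (pi * u)"
  proof (intro exI[of _ "pi * k'"])
    show "AE u in lborel. u \<in> {0<..<1} \<longrightarrow> G u = pi * k' * cos (pi * u)"
      using AEG
    proof eventually_elim
      case (elim u)
      show ?case
      proof
        assume u: "u \<in> {0<..<1}"
        then have "G u = pi * V u * c u" using elim by simp
        also have "\<dots> = pi * k' * cos (pi * u)" using Vk[of u] u sinpos[of u] by (simp add: c_def)
        finally show "G u = pi * k' * cos (pi * u)" .
      qed
    qed
  qed
qed



lemma indef_props:
  fixes G :: "real \<Rightarrow> real"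
  assumes G1: "set_integrable lborel {0..1} G"
  defines "V \<equiv> \<lambda>w. LINT u:{0..max 0 (min w 1)}|lborel. G u"
  shows "continuous_on UNIV V"
    and "\<And>w. 0 \<le> w \<Longrightarrow> w \<le> 1 \<Longrightarrow> V w = (LINT u:{0..w}|lborel. G u)"
    and "V 0 = 0"
    and "V 1 = (LINT u:{0..1}|lborel. G u)"
    and "\<And>x a. 0 < x \<Longrightarrow> x \<le> 1 \<Longrightarrow> 0 \<le> a \<Longrightarrow> continuous (at x within {0..x}) G \<Longrightarrow>
           (V has_real_derivative G x) (at x within {a..x})"
    and "V \<in> borel_measurable borel"
proof -
  note ind = indef_integral[OF G1]
  show Vw: "\<And>w. 0 \<le> w \<Longrightarrow> w \<le> 1 \<Longrightarrow> V w = (LINT u:{0..w}|lborel. G u)"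
    by (simp add: V_def)
  show Vcont: "continuous_on UNIV V"
  proof -
    have "continuous_on UNIV ((\<lambda>t. LINT u:{0..t}|lborel. G u) \<circ> (\<lambda>w. max 0 (min w 1)))"
      by (rule continuous_on_compose[OF _ continuous_on_subset[OF ind(1)]])
         (auto intro!: continuous_intros)
    then show ?thesis by (simp add: V_def o_def)
  qed
  then show "V \<in> borel_measurable borel" by (rule borel_measurable_continuous_onI)
  show "V 0 = 0" using ind(2)[of 0 0] by (simp add: V_def)
  show "V 1 = (LINT u:{0..1}|lborel. G u)" by (simp add: V_def)
  fix x a :: real assume x: "0 < x" "x \<le> 1" and a: "0 \<le> a" and Gc: "continuous (at x within {0..x}) G"
  have G1x: "G integrable_on {0..x}" using set_borel_integral_eq_integral(1)[OF ind(3)[of 0 x]] x by auto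
  have "((\<lambda>u. integral {0..u} G) has_vector_derivative G x) (at x within {0..x} - {})"
    by (rule integral_has_vector_derivative_continuous_at[OF G1x]) (use x Gc in auto)
  then have "((\<lambda>u. integral {0..u} G) has_real_derivative G x) (at x within {0..x})"
    by (simp add: has_real_derivative_iff_has_vector_derivative)
  then have "(V has_real_derivative G x) (at x within {0..x})"
  proof (rule has_field_derivative_transform_within[of _ _ _ _ 1])
    fix u assume u: "u \<in> {0..x}"
    then show "integral {0..u} G = V u"
      using x set_borel_integral_eq_integral(2)[OF ind(3)[of 0 u]] by (simp add: Vw)
  qed (use x in auto)
  then show "(V has_real_derivative G x) (at x within {a..x})" by (rule DERIV_subset) (use x a in auto)
qed


lemma uspace:
  fixes G :: "real \<Rightarrow> real"
  assumes Gm: "G \<in> borel_measurable borel"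
    and G1: "set_integrable lborel {0..1} G"
    and G2: "set_integrable lborel {0..1} (\<lambda>u. (G u)\<^sup>2)"
    and Gc: "\<And>x. x \<in> {0<..<1} \<Longrightarrow> continuous (at x within {0..x}) G"
    and G0: "(LINT u:{0..1}|lborel. G u) = 0"
  defines "V \<equiv> \<lambda>w. LINT u:{0..max 0 (min w 1)}|lborel. G u"
  defines "W \<equiv> \<lambda>w. LINT u:{0..max 0 (min w 1)}|lborel. V u"
  shows "pi ^ 4 * ((LINT u:{0..1}|lborel. (W u)\<^sup>2) - (LINT u:{0..1}|lborel. W u)\<^sup>2) \<le> (LINT u:{0..1}|lborel. (G u)\<^sup>2)"
    and "pi ^ 4 * ((LINT u:{0..1}|lborel. (W u)\<^sup>2) - (LINT u:{0..1}|lborel. W u)\<^sup>2) = (LINT u:{0..1}|lborel. (G u)\<^sup>2) \<Longrightarrow>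
         \<exists>k. AE u in lborel. u \<in> {0<..<1} \<longrightarrow> G u = k * cos (pi * u)"
proof -
  note wir = wirtinger[OF Gm G1 G2 Gc G0, folded V_def]
  note VP = indef_props[OF G1, folded V_def]
  have VcS[continuous_intros]: "continuous_on S V" for S using VP(1) by (rule continuous_on_subset) auto
  have Visc: "isCont V x" for x using VP(1) by (simp add: continuous_on_eq_continuous_at)
  have Vi: "set_integrable lborel {0..1} V"
    by (rule borel_integrable_atLeastAtMost') (auto intro!: continuous_intros)
  have V2i: "set_integrable lborel {0..1} (\<lambda>u. (V u)\<^sup>2)"
    by (rule borel_integrable_atLeastAtMost') (auto intro!: continuous_intros)
  note WP = indef_props[OF Vi, folded W_def]
  have WcS[continuous_intros]: "continuous_on S W" for S using WP(1) by (rule continuous_on_subset) auto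
  have Wisc: "isCont W x" for x using WP(1) by (simp add: continuous_on_eq_continuous_at)
  have Wi: "set_integrable lborel {0..1} W"
    by (rule borel_integrable_atLeastAtMost') (auto intro!: continuous_intros)
  have W2i: "set_integrable lborel {0..1} (\<lambda>u. (W u)\<^sup>2)"
    by (rule borel_integrable_atLeastAtMost') (auto intro!: continuous_intros)
  define m where "m = (LINT u:{0..1}|lborel. W u)"
  define H where "H u = W u - m" for u
  have HcS[continuous_intros]: "continuous_on S H" for S unfolding H_def[abs_def] by (intro continuous_intros)
  have Hisc: "isCont H x" for x unfolding H_def[abs_def] by (intro continuous_intros Wisc)
  have Hm: "H \<in> borel_measurable borel" by (rule borel_measurable_continuous_onI) (intro continuous_intros)
  have H1: "set_integrable lborel {0..1} H"
    by (rule borel_integrable_atLeastAtMost') (auto intro!: continuous_intros)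
  have H2: "set_integrable lborel {0..1} (\<lambda>u. (H u)\<^sup>2)"
    by (rule borel_integrable_atLeastAtMost') (auto intro!: continuous_intros)
  have Hc: "continuous (at x within {0..x}) H" for x
    using Hisc by (rule continuous_at_imp_continuous_within)
  have ci: "set_integrable lborel {0..1::real} (\<lambda>u. c)" for c :: real
    by (rule borel_integrable_atLeastAtMost') auto
  have cst: "(LINT u:{0..1::real}|lborel. c) = c" for c :: real
    by (subst set_integral_const) auto
  have H0: "(LINT u:{0..1}|lborel. H u) = 0"
    unfolding H_def using set_integral_diff(2)[OF Wi ci[of m]] by (simp add: cst m_def)
  define \<Phi> where "\<Phi> \<equiv> \<lambda>w. LINT u:{0..max 0 (min w 1)}|lborel. H u"
  note wH = wirtinger(1)[OF Hm H1 H2 Hc H0, folded \<Phi>_def]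
  note PP = indef_props[OF H1, folded \<Phi>_def]
  have PcS[continuous_intros]: "continuous_on S \<Phi>" for S using PP(1) by (rule continuous_on_subset) auto
  have Pisc: "isCont \<Phi> x" for x using PP(1) by (simp add: continuous_on_eq_continuous_at)
  have P2i: "set_integrable lborel {0..1} (\<lambda>u. (\<Phi> u)\<^sup>2)"
    by (rule borel_integrable_atLeastAtMost') (auto intro!: continuous_intros)
  have PVi: "set_integrable lborel {0..1} (\<lambda>u. \<Phi> u * V u)"
    by (rule borel_integrable_atLeastAtMost') (auto intro!: continuous_intros)
  have ibp: "(LINT u:{0..1}|lborel. (H u)\<^sup>2 + \<Phi> u * V u) = 0"
  proof -
    have "(LINT u:{0..1}|lborel. (H u)\<^sup>2 + \<Phi> u * V u) = \<Phi> 1 * H 1 - \<Phi> 0 * H 0"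
    proof (rule ftc_left)
      show "set_integrable lborel {0..1} (\<lambda>u. (H u)\<^sup>2 + \<Phi> u * V u)"
        by (rule borel_integrable_atLeastAtMost') (auto intro!: continuous_intros)
      show "continuous (at x within {0..x}) (\<lambda>u. (H u)\<^sup>2 + \<Phi> u * V u)" for x
        by (rule continuous_at_imp_continuous_within) (intro continuous_intros Hisc Pisc Visc)
      show "continuous_on {0..1} (\<lambda>u. \<Phi> u * H u)" by (intro continuous_intros)
      fix x :: real assume x: "x \<in> {0<..1}"
      have dP: "(\<Phi> has_real_derivative H x) (at x within {0..x})"
        by (rule PP(5)) (use x Hc in auto)
      have dW: "(W has_real_derivative V x) (at x within {0..x})"
        by (rule WP(5)) (use x continuous_at_imp_continuous_within[OF Visc] in auto)
      have dH: "(H has_real_derivative V x) (at x within {0..x})"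
        unfolding H_def[abs_def] using DERIV_diff[OF dW DERIV_const[of m]] by simp
      show "((\<lambda>u. \<Phi> u * H u) has_real_derivative (H x)\<^sup>2 + \<Phi> x * V x) (at x within {0..x})"
        by (rule DERIV_cong[OF DERIV_mult[OF dP dH]]) (simp add: power2_eq_square algebra_simps)
    qed auto
    also have "\<dots> = 0" using H0 indef_integral(2)[OF H1, of 0 0] by (simp add: \<Phi>_def)
    finally show ?thesis .
  qed
  have ibp': "(LINT u:{0..1}|lborel. (H u)\<^sup>2) = - (LINT u:{0..1}|lborel. \<Phi> u * V u)"
    using ibp set_integral_add(2)[OF H2 PVi] by simp
  have amgm: "- (\<Phi> u * V u) \<le> pi\<^sup>2 * (\<Phi> u)\<^sup>2 / 2 + (V u)\<^sup>2 / (2 * pi\<^sup>2)" for u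
  proof -
    have "0 \<le> (pi * \<Phi> u + V u / pi)\<^sup>2" by simp
    also have "\<dots> = pi\<^sup>2 * (\<Phi> u)\<^sup>2 + 2 * (\<Phi> u * V u) + (V u)\<^sup>2 / pi\<^sup>2"
      by (simp add: power2_eq_square field_simps)
    finally show ?thesis by (simp add: field_simps)
  qed
  define X where "X = (LINT u:{0..1}|lborel. (H u)\<^sup>2)"
  define Y where "Y = (LINT u:{0..1}|lborel. (V u)\<^sup>2)"
  define Z where "Z = (LINT u:{0..1}|lborel. (\<Phi> u)\<^sup>2)"
  define T where "T = (LINT u:{0..1}|lborel. (G u)\<^sup>2)"
  have "X \<le> (LINT u:{0..1}|lborel. pi\<^sup>2 * (\<Phi> u)\<^sup>2 / 2 + (V u)\<^sup>2 / (2 * pi\<^sup>2))"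
  proof -
    have "X = (LINT u:{0..1}|lborel. - (\<Phi> u * V u))"
      unfolding X_def ibp' using set_integral_uminus[OF PVi] by simp
    also have "\<dots> \<le> (LINT u:{0..1}|lborel. pi\<^sup>2 * (\<Phi> u)\<^sup>2 / 2 + (V u)\<^sup>2 / (2 * pi\<^sup>2))"
    proof (rule set_integral_mono)
      show "set_integrable lborel {0..1} (\<lambda>u. - (\<Phi> u * V u))"
        by (rule borel_integrable_atLeastAtMost') (auto intro!: continuous_intros)
      show "set_integrable lborel {0..1} (\<lambda>u. pi\<^sup>2 * (\<Phi> u)\<^sup>2 / 2 + (V u)\<^sup>2 / (2 * pi\<^sup>2))"
        by (rule borel_integrable_atLeastAtMost') (auto intro!: continuous_intros)
    qed (rule amgm)
    finally show ?thesis .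
  qed
  also have "\<dots> = pi\<^sup>2 * Z / 2 + Y / (2 * pi\<^sup>2)"
    using set_integral_add(2)[of lborel "{0..1}" "\<lambda>u. pi\<^sup>2 * (\<Phi> u)\<^sup>2 / 2" "\<lambda>u. (V u)\<^sup>2 / (2 * pi\<^sup>2)"] P2i V2i
    by (simp add: Z_def Y_def)
  finally have XZ: "X \<le> pi\<^sup>2 * Z / 2 + Y / (2 * pi\<^sup>2)" .
  have ZX: "pi\<^sup>2 * Z \<le> X" using wH by (simp add: Z_def X_def \<Phi>_def)
  have XY: "pi\<^sup>2 * X \<le> Y"
  proof -
    have h1: "2 * (pi\<^sup>2 * X) \<le> pi\<^sup>2 * (pi\<^sup>2 * Z) + Y"
    proof -
      have "(2 * pi\<^sup>2) * X \<le> (2 * pi\<^sup>2) * (pi\<^sup>2 * Z / 2 + Y / (2 * pi\<^sup>2))"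
        by (rule mult_left_mono[OF XZ]) simp
      also have "\<dots> = pi\<^sup>2 * (pi\<^sup>2 * Z) + Y" by (simp add: field_simps)
      finally show ?thesis by (simp add: mult.assoc)
    qed
    have h2: "pi\<^sup>2 * (pi\<^sup>2 * Z) \<le> pi\<^sup>2 * X" by (rule mult_left_mono[OF ZX]) simp
    from h1 h2 show ?thesis by linarith
  qed
  have YT: "pi\<^sup>2 * Y \<le> T" using wir(1) by (simp add: Y_def T_def V_def)
  have Xvar: "X = (LINT u:{0..1}|lborel. (W u)\<^sup>2) - m\<^sup>2"
  proof -
    have "X = (LINT u:{0..1}|lborel. (W u)\<^sup>2 - 2 * m * W u + m\<^sup>2)"
      unfolding X_def H_def by (simp add: power2_diff algebra_simps)
    also have "\<dots> = (LINT u:{0..1}|lborel. (W u)\<^sup>2) - 2 * m * m + m\<^sup>2"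
      using W2i Wi ci by (simp add: set_integral_diff set_integral_add cst m_def)
    finally show ?thesis by (simp add: power2_eq_square)
  qed
  have main: "pi ^ 4 * X \<le> pi\<^sup>2 * Y"
  proof -
    have "pi ^ 4 * X = pi\<^sup>2 * (pi\<^sup>2 * X)" by (simp add: power2_eq_square power4_eq_xxxx)
    also have "\<dots> \<le> pi\<^sup>2 * Y" using XY by (intro mult_left_mono) auto
    finally show ?thesis .
  qed
  show "pi ^ 4 * ((LINT u:{0..1}|lborel. (W u)\<^sup>2) - (LINT u:{0..1}|lborel. W u)\<^sup>2) \<le> (LINT u:{0..1}|lborel. (G u)\<^sup>2)"
    using main YT Xvar by (simp add: m_def T_def)
  assume eq: "pi ^ 4 * ((LINT u:{0..1}|lborel. (W u)\<^sup>2) - (LINT u:{0..1}|lborel. W u)\<^sup>2) = (LINT u:{0..1}|lborel. (G u)\<^sup>2)"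
  have "pi\<^sup>2 * Y = T" using eq main YT Xvar by (simp add: m_def T_def)
  then show "\<exists>k. AE u in lborel. u \<in> {0<..<1} \<longrightarrow> G u = k * cos (pi * u)"
    using wir(2) by (simp add: Y_def T_def V_def)
qed



lemma ftc_ab:
  fixes f F :: "real \<Rightarrow> real"
  assumes "a \<le> b" "\<And>x. (F has_real_derivative f x) (at x)" "continuous_on {a..b} f"
  shows "(LINT x:{a..b}|lborel. f x) = F b - F a"
  unfolding set_lebesgue_integral_def
  by (rule integral_FTC_atLeastAtMost[OF assms(1) _ assms(3)])
     (use assms(2) in \<open>auto simp: has_real_derivative_iff_has_vector_derivative[symmetric] intro: has_field_derivative_at_within\<close>)

lemma uspace_arcsine:
  fixes G :: "real \<Rightarrow> real" and c :: real
  assumes Gm: "G \<in> borel_measurable borel"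
    and Geq: "\<And>u. u \<in> {0<..<1} \<Longrightarrow> G u = - c * cos (pi * u)"
  defines "V \<equiv> \<lambda>w. LINT u:{0..max 0 (min w 1)}|lborel. G u"
  defines "W \<equiv> \<lambda>w. LINT u:{0..max 0 (min w 1)}|lborel. V u"
  shows "pi ^ 4 * ((LINT u:{0..1}|lborel. (W u)\<^sup>2) - (LINT u:{0..1}|lborel. W u)\<^sup>2) = (LINT u:{0..1}|lborel. (G u)\<^sup>2)"
proof -
  have [measurable]: "G \<in> borel_measurable lborel" using Gm by (simp add: measurable_lborel1)
  have AEG: "AE u in lborel. u \<in> {0..w} \<longrightarrow> G u = - c * cos (pi * u)" if w: "w \<le> 1" for w :: real
    using AE_lborel_singleton[of 0] AE_lborel_singleton[of 1]
  proof eventually_elim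
    case (elim u)
    show ?case
    proof
      assume "u \<in> {0..w}"
      with elim w have "u \<in> {0<..<1}" by auto
      then show "G u = - c * cos (pi * u)" by (rule Geq)
    qed
  qed
  have Vf: "V w = - (c / pi) * sin (pi * w)" if w: "0 \<le> w" "w \<le> 1" for w
  proof -
    have "V w = (LINT u:{0..w}|lborel. G u)" using w by (simp add: V_def)
    also have "\<dots> = (LINT u:{0..w}|lborel. - c * cos (pi * u))"
      by (rule set_lebesgue_integral_cong_AE) (use AEG[OF w(2)] in auto)
    also have "\<dots> = - (c / pi) * sin (pi * w) - (- (c / pi) * sin (pi * 0))"
      by (rule ftc_ab[OF w(1)])
         (auto intro!: continuous_intros derivative_eq_intros)
    finally show ?thesis by simp
  qed
  have Wf: "W w = (c / pi\<^sup>2) * (cos (pi * w) - 1)" if w: "0 \<le> w" "w \<le> 1" for w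
  proof -
    have "W w = (LINT u:{0..w}|lborel. V u)" using w by (simp add: W_def)
    also have "\<dots> = (LINT u:{0..w}|lborel. - (c / pi) * sin (pi * u))"
      by (rule set_lebesgue_integral_cong) (use w in \<open>auto simp: Vf\<close>)
    also have "\<dots> = (c / pi\<^sup>2) * cos (pi * w) - (c / pi\<^sup>2) * cos (pi * 0)"
      by (rule ftc_ab[OF w(1)])
         (auto intro!: continuous_intros derivative_eq_intros simp: power2_eq_square)
    finally show ?thesis by (simp add: right_diff_distrib)
  qed
  have I1: "(LINT u:{0..1}|lborel. W u) = - c / pi\<^sup>2"
  proof -
    have "(LINT u:{0..1}|lborel. W u) = (LINT u:{0..1}|lborel. (c / pi\<^sup>2) * (cos (pi * u) - 1))"
      by (rule set_lebesgue_integral_cong) (auto simp: Wf)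
    also have "\<dots> = (c / pi\<^sup>2) * (sin (pi * 1) / pi - 1) - (c / pi\<^sup>2) * (sin (pi * 0) / pi - 0)"
      by (rule ftc_ab) (auto intro!: continuous_intros derivative_eq_intros simp: field_simps)
    finally show ?thesis by simp
  qed
  have I2: "(LINT u:{0..1}|lborel. (W u)\<^sup>2) = 3 / 2 * (c\<^sup>2 / pi ^ 4)"
  proof -
    define F where "F u = (c\<^sup>2 / pi ^ 4) * (3 / 2 * u - 2 * sin (pi * u) / pi + sin (2 * (pi * u)) / (4 * pi))" for u
    have "(LINT u:{0..1}|lborel. (W u)\<^sup>2) = (LINT u:{0..1}|lborel. ((c / pi\<^sup>2) * (cos (pi * u) - 1))\<^sup>2)"
      by (rule set_lebesgue_integral_cong) (auto simp: Wf)
    also have "\<dots> = F 1 - F 0"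
    proof (rule ftc_ab)
      fix x
      have "(F has_real_derivative (c\<^sup>2 / pi ^ 4) * (3 / 2 - 2 * cos (pi * x) + cos (2 * (pi * x)) / 2)) (at x)"
        unfolding F_def[abs_def] by (auto intro!: derivative_eq_intros simp: field_simps)
      moreover have "(c\<^sup>2 / pi ^ 4) * (3 / 2 - 2 * cos (pi * x) + cos (2 * (pi * x)) / 2) = ((c / pi\<^sup>2) * (cos (pi * x) - 1))\<^sup>2"
        unfolding cos_double_cos[of "pi * x"] by (simp add: power2_eq_square power4_eq_xxxx field_simps)
      ultimately show "(F has_real_derivative ((c / pi\<^sup>2) * (cos (pi * x) - 1))\<^sup>2) (at x)" by simp
    qed (auto intro!: continuous_intros)
    also have "\<dots> = 3 / 2 * (c\<^sup>2 / pi ^ 4)" by (simp add: F_def)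
    finally show ?thesis .
  qed
  have I3: "(LINT u:{0..1}|lborel. (G u)\<^sup>2) = c\<^sup>2 / 2"
  proof -
    define F where "F u = c\<^sup>2 * (u / 2 + sin (2 * (pi * u)) / (4 * pi))" for u
    have "(LINT u:{0..1}|lborel. (G u)\<^sup>2) = (LINT u:{0..1}|lborel. (- c * cos (pi * u))\<^sup>2)"
      by (rule set_lebesgue_integral_cong_AE) (use AEG[of 1] in auto)
    also have "\<dots> = F 1 - F 0"
    proof (rule ftc_ab)
      fix x
      have "(F has_real_derivative c\<^sup>2 * (1 / 2 + cos (2 * (pi * x)) / 2)) (at x)"
        unfolding F_def[abs_def] by (auto intro!: derivative_eq_intros simp: field_simps)
      moreover have "c\<^sup>2 * (1 / 2 + cos (2 * (pi * x)) / 2) = (- c * cos (pi * x))\<^sup>2"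
        unfolding cos_double_cos[of "pi * x"] by (simp add: power2_eq_square field_simps)
      ultimately show "(F has_real_derivative (- c * cos (pi * x))\<^sup>2) (at x)" by simp
    qed (auto intro!: continuous_intros)
    also have "\<dots> = c\<^sup>2 / 2" by (simp add: F_def)
    finally show ?thesis .
  qed
  show ?thesis unfolding I1 I2 I3 by (simp add: power2_eq_square power4_eq_xxxx field_simps)
qed


locale xsetup =
  fixes f :: "real \<Rightarrow> real"
  assumes dens: "prob_density f"
begin

definition M where "M = density lborel (\<lambda>x. ennreal (f x))"

lemma f_meas[measurable]: "f \<in> borel_measurable borel" and f_nn: "\<And>x. 0 \<le> f x"
  and f_int: "integrable lborel f" and f_one: "(\<integral>x. f x \<partial>lborel) = 1"
  using dens by (auto simp: prob_density_def measurable_lborel1)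

lemma f_meas_lb[measurable]: "f \<in> borel_measurable lborel"
  using f_meas by (simp add: measurable_lborel1)

lemma real_distr_M: "real_distribution M"
proof -
  have "emeasure M (space M) = 1"
  proof -
    have "emeasure M (space M) = (\<integral>\<^sup>+x. ennreal (f x) \<partial>lborel)"
      by (simp add: M_def emeasure_density)
    also have "\<dots> = ennreal (\<integral>x. f x \<partial>lborel)"
      by (rule nn_integral_eq_integral[OF f_int]) (simp add: f_nn)
    finally show ?thesis by (simp add: f_one)
  qed
  then have "prob_space M" by (rule prob_spaceI)
  moreover have "sets M = sets borel" by (simp add: M_def)
  ultimately show ?thesis unfolding real_distribution_def real_distribution_axioms_def by simp
qed

sublocale cd: cdf_distribution M
  unfolding cdf_distribution_def by (rule real_distr_M)

lemma integral_M: "g \<in> borel_measurable borel \<Longrightarrow> (\<integral>x. g x \<partial>M) = (\<integral>x. f x * g x \<partial>lborel)"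
  unfolding M_def by (subst integral_density) (auto simp: f_nn measurable_lborel1)

lemma integrable_M: "g \<in> borel_measurable borel \<Longrightarrow> integrable M g \<longleftrightarrow> integrable lborel (\<lambda>x. f x * g x)"
  unfolding M_def by (subst integrable_density) (auto simp: f_nn measurable_lborel1)

lemma C_eq: "cdf M x = (LINT t:{..x}|lborel. f t)"
proof -
  have "cdf M x = measure M {..x}" by (simp add: cdf_def)
  also have "\<dots> = (\<integral>t. indicator {..x} t \<partial>M)" by simp
  also have "\<dots> = (\<integral>t. f t * indicator {..x} t \<partial>lborel)" by (rule integral_M) simp
  also have "\<dots> = (LINT t:{..x}|lborel. f t)" by (simp add: set_lebesgue_integral_def mult.commute)
  finally show ?thesis .
qed

lemma C_cont: "isCont (cdf M) x"
proof -
  have "measure M {x} = (\<integral>t. indicator {x} t \<partial>M)" by simp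
  also have "\<dots> = (\<integral>t. f t * indicator {x} t \<partial>lborel)" by (rule integral_M) simp
  also have "\<dots> = 0"
  proof -
    have "AE t in lborel. f t * indicator {x} t = 0" using AE_lborel_singleton[of x] by eventually_elim auto
    then show ?thesis by (simp add: integral_cong_AE[of _ _ "\<lambda>_. 0"])
  qed
  finally show ?thesis by (simp add: cd.isCont_cdf)
qed


definition G where "G u = (if u \<in> {0<..<1} then Inf {x. u \<le> cdf M x} else 0)"

lemma G_I: "u \<in> {0<..<1} \<Longrightarrow> G u = cd.I u"
  by (simp add: G_def)

lemma galois: "u \<in> {0<..<1} \<Longrightarrow> G u \<le> x \<longleftrightarrow> u \<le> cdf M x"
  using cd.pseudoinverse[of u x] by (simp add: G_def)

lemma C_G: assumes u: "u \<in> {0<..<1}" shows "cdf M (G u) = u"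
proof (rule antisym)
  show "u \<le> cdf M (G u)" using galois[OF u, of "G u"] by simp
  show "cdf M (G u) \<le> u"
  proof (rule ccontr)
    assume "\<not> cdf M (G u) \<le> u"
    then have lt: "u < cdf M (G u)" by simp
    have "((cdf M) \<longlongrightarrow> cdf M (G u)) (at_left (G u))"
      using C_cont[of "G u"] by (simp add: isCont_def filterlim_at_split)
    then have "eventually (\<lambda>x. u < cdf M x) (at_left (G u))"
      using order_tendstoD(1)[OF _ lt] by blast
    moreover have "eventually (\<lambda>x. x < G u) (at_left (G u))" unfolding eventually_at_filter by simp
    ultimately have "eventually (\<lambda>x. u < cdf M x \<and> x < G u) (at_left (G u))" by (rule eventually_conj)
    then obtain x where x: "u < cdf M x" "x < G u"
      using eventually_happens[of _ "at_left (G u)"] by (auto simp: trivial_limit_at_left_real)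
    then have "G u \<le> x" using galois[OF u, of x] by simp
    then show False using x by simp
  qed
qed

lemma G_mono: "u \<in> {0<..<1} \<Longrightarrow> v \<in> {0<..<1} \<Longrightarrow> u \<le> v \<Longrightarrow> G u \<le> G v"
  using cd.mono_I unfolding mono_on_def by (simp add: G_def)

lemma G_meas[measurable]: "G \<in> borel_measurable borel"
proof -
  have "cd.I \<in> borel_measurable (restrict_space borel {0<..<1})" by (rule cd.measurable_CI)
  then have "(\<lambda>x. if x \<in> {0<..<1} then cd.I x else 0) \<in> borel_measurable borel"
    by (subst (asm) measurable_restrict_space_iff) auto
  then show ?thesis by (simp add: G_def[abs_def])
qed

lemma G_leftcont: assumes u: "u \<in> {0<..<1}" shows "continuous (at u within {0..u}) G"
  unfolding continuous_within_eps_delta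
proof (intro allI impI)
  fix e :: real assume e: "0 < e"
  define x0 where "x0 = G u - e"
  have Cx0: "cdf M x0 < u"
  proof (rule ccontr)
    assume "\<not> cdf M x0 < u"
    then have "G u \<le> x0" using galois[OF u, of x0] by simp
    then show False using e by (simp add: x0_def)
  qed
  define d where "d = min (u - cdf M x0) u"
  have d: "0 < d" using Cx0 u by (simp add: d_def)
  show "\<exists>d>0. \<forall>x'\<in>{0..u}. dist x' u < d \<longrightarrow> dist (G x') (G u) < e"
  proof (intro exI[of _ d] conjI d ballI impI)
    fix w assume w: "w \<in> {0..u}" "dist w u < d"
    have w1: "u - d < w" "w \<le> u" using w by (auto simp: dist_real_def)
    have w01: "w \<in> {0<..<1}" using w1 u by (auto simp: d_def)
    have "cdf M x0 < w" using w1 by (simp add: d_def)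
    then have "x0 < G w" using galois[OF w01, of x0] by simp
    moreover have "G w \<le> G u" using G_mono[OF w01 u w1(2)] .
    ultimately show "dist (G w) (G u) < e" by (simp add: dist_real_def x0_def)
  qed
qed

definition U where "U = restrict_space lborel {0<..<1::real}"

lemma distr_G: "distr U borel G = M"
proof -
  have "distr U borel G = distr U borel cd.I"
    by (rule distr_cong) (auto simp: U_def space_restrict_space G_I)
  then show ?thesis using cd.distr_I_eq_M by (simp add: U_def)
qed

lemma G_meas_U: "G \<in> measurable U borel"
  unfolding U_def by (rule measurable_restrict_space1) (simp add: measurable_lborel1)

lemma integral_U: fixes k :: "real \<Rightarrow> real" shows "(\<integral>x. k x \<partial>U) = (LINT x:{0<..<1}|lborel. k x)"
  unfolding U_def set_lebesgue_integral_def by (rule integral_restrict_space) auto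

lemma integrable_U: fixes k :: "real \<Rightarrow> real" shows "integrable U k \<longleftrightarrow> set_integrable lborel {0<..<1} k"
  unfolding U_def set_integrable_def by (rule integrable_restrict_space) auto

lemma transfer:
  assumes h[measurable]: "h \<in> borel_measurable borel"
  shows "(\<integral>x. f x * h x \<partial>lborel) = (LINT u:{0<..<1}|lborel. h (G u))"
    and "integrable lborel (\<lambda>x. f x * h x) \<longleftrightarrow> set_integrable lborel {0<..<1} (\<lambda>u. h (G u))"
proof -
  have "(\<integral>x. f x * h x \<partial>lborel) = (\<integral>x. h x \<partial>M)" by (rule integral_M[symmetric]) simp
  also have "\<dots> = (\<integral>x. h x \<partial>distr U borel G)" by (simp add: distr_G)
  also have "\<dots> = (\<integral>u. h (G u) \<partial>U)" by (rule integral_distr[OF G_meas_U h])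
  finally show "(\<integral>x. f x * h x \<partial>lborel) = (LINT u:{0<..<1}|lborel. h (G u))" by (simp add: integral_U)
  have "integrable lborel (\<lambda>x. f x * h x) \<longleftrightarrow> integrable M h" by (rule integrable_M[symmetric]) simp
  also have "\<dots> \<longleftrightarrow> integrable (distr U borel G) h" by (simp add: distr_G)
  also have "\<dots> \<longleftrightarrow> integrable U (\<lambda>u. h (G u))" by (rule integrable_distr_eq[OF G_meas_U h])
  finally show "integrable lborel (\<lambda>x. f x * h x) \<longleftrightarrow> set_integrable lborel {0<..<1} (\<lambda>u. h (G u))"
    by (simp add: integrable_U)
qed


lemma endpt_AE: "AE x in lborel. x \<noteq> 0 \<and> x \<noteq> (1::real)"
  using AE_lborel_singleton[of 0] AE_lborel_singleton[of 1] by eventually_elim auto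

lemma Ioo_Icc:
  fixes k :: "real \<Rightarrow> real"
  assumes [measurable]: "k \<in> borel_measurable borel"
  shows "(LINT u:{0<..<1}|lborel. k u) = (LINT u:{0..1}|lborel. k u)"
    and "set_integrable lborel {0<..<1} k \<longleftrightarrow> set_integrable lborel {0..1} k"
proof -
  have ae: "AE x in lborel. indicator {0<..<1} x *\<^sub>R k x = indicator {0..1} x *\<^sub>R k x"
    using endpt_AE by eventually_elim (auto simp: indicator_def)
  show "(LINT u:{0<..<1}|lborel. k u) = (LINT u:{0..1}|lborel. k u)"
    unfolding set_lebesgue_integral_def by (rule integral_cong_AE[OF _ _ ae]) (auto simp: measurable_lborel1)
  show "set_integrable lborel {0<..<1} k \<longleftrightarrow> set_integrable lborel {0..1} k"
    unfolding set_integrable_def by (rule integrable_cong_AE[OF _ _ ae]) (auto simp: measurable_lborel1)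
qed

lemma Ioo_upto:
  fixes k :: "real \<Rightarrow> real"
  assumes [measurable]: "k \<in> borel_measurable borel" and w: "0 \<le> w" "w \<le> 1"
  shows "(LINT u:{0<..<1}|lborel. indicator {..w} u * k u) = (LINT u:{0..w}|lborel. k u)"
proof -
  have ae: "AE x in lborel. indicator {0<..<1} x *\<^sub>R (indicator {..w} x * k x) = indicator {0..w} x *\<^sub>R k x"
    using endpt_AE by eventually_elim (use w in \<open>auto simp: indicator_def\<close>)
  show ?thesis
    unfolding set_lebesgue_integral_def by (rule integral_cong_AE[OF _ _ ae]) (auto simp: measurable_lborel1)
qed

lemma C_range: "0 \<le> cdf M x" "cdf M x \<le> 1"
  using cd.cdf_nonneg cd.cdf_bounded_prob by auto

lemma C_meas[measurable]: "cdf M \<in> borel_measurable borel"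
  by (rule cd.measurable_C)

end

locale xsetup2 = xsetup +
  assumes symm: "symmetric_fun f"
    and finvar: "integrable lborel (\<lambda>x. x\<^sup>2 * f x)"
begin

definition V where "V \<equiv> \<lambda>w. LINT u:{0..max 0 (min w 1)}|lborel. G u"
definition W where "W \<equiv> \<lambda>w. LINT u:{0..max 0 (min w 1)}|lborel. V u"

lemma xf_int: "integrable lborel (\<lambda>x. f x * x)"
proof (rule Bochner_Integration.integrable_bound)
  show "integrable lborel (\<lambda>x. f x + x\<^sup>2 * f x)" by (rule Bochner_Integration.integrable_add[OF f_int finvar])
  show "(\<lambda>x. f x * x) \<in> borel_measurable lborel" by measurable
  show "AE x in lborel. norm (f x * x) \<le> norm (f x + x\<^sup>2 * f x)"
  proof (intro AE_I2)
    fix x :: real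
    have "\<bar>x\<bar> \<le> 1 + x\<^sup>2"
    proof (cases "\<bar>x\<bar> \<le> 1")
      case True then show ?thesis using zero_le_power2[of x] by linarith
    next
      case False
      then have "\<bar>x\<bar> * 1 \<le> \<bar>x\<bar> * \<bar>x\<bar>" by (intro mult_left_mono) auto
      moreover have "\<bar>x\<bar> * \<bar>x\<bar> = x\<^sup>2" by (simp add: power2_eq_square abs_mult_self_eq)
      ultimately show ?thesis by linarith
    qed
    then have "f x * \<bar>x\<bar> \<le> f x * (1 + x\<^sup>2)" by (intro mult_left_mono f_nn)
    moreover have "norm (f x * x) = f x * \<bar>x\<bar>" using f_nn[of x] by (simp add: abs_mult)
    moreover have "norm (f x + x\<^sup>2 * f x) = f x * (1 + x\<^sup>2)"
    proof -
      have "f x + x\<^sup>2 * f x = f x * (1 + x\<^sup>2)" by (simp add: algebra_simps)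
      moreover have "0 \<le> f x * (1 + x\<^sup>2)" using f_nn[of x] by simp
      ultimately show ?thesis by simp
    qed
    ultimately show "norm (f x * x) \<le> norm (f x + x\<^sup>2 * f x)" by simp
  qed
qed

lemma G1: "set_integrable lborel {0..1} G"
  using transfer(2)[of "\<lambda>x. x"] xf_int Ioo_Icc(2)[of G] by simp

lemma G2: "set_integrable lborel {0..1} (\<lambda>u. (G u)\<^sup>2)"
proof -
  have "integrable lborel (\<lambda>x. f x * x\<^sup>2)" using finvar by (simp add: mult.commute)
  then show ?thesis using transfer(2)[of "\<lambda>x. x\<^sup>2"] Ioo_Icc(2)[of "\<lambda>u. (G u)\<^sup>2"] by simp
qed

lemma mean0: "(\<integral>x. f x * x \<partial>lborel) = 0"
proof -
  have "(\<integral>x. f x * x \<partial>lborel) = \<bar>-1\<bar> *\<^sub>R (\<integral>x. f (0 + -1 * x) * (0 + -1 * x) \<partial>lborel)"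
    by (rule lborel_integral_real_affine) simp
  also have "\<dots> = - (\<integral>x. f x * x \<partial>lborel)"
    using symm by (simp add: symmetric_fun_def)
  finally show ?thesis by simp
qed

lemma G0: "(LINT u:{0..1}|lborel. G u) = 0"
  using transfer(1)[of "\<lambda>x. x"] mean0 Ioo_Icc(1)[of G] by simp

lemma var_eq: "var_f f = (LINT u:{0..1}|lborel. (G u)\<^sup>2)"
  using transfer(1)[of "\<lambda>x. x\<^sup>2"] Ioo_Icc(1)[of "\<lambda>u. (G u)\<^sup>2"]
  by (simp add: var_f_def mult.commute)


lemma V_cont: "continuous_on UNIV V"
  using indef_props(1)[OF G1] by (simp add: V_def)
lemma V_meas[measurable]: "V \<in> borel_measurable borel"
  using indef_props(6)[OF G1] by (simp add: V_def)
lemma V_eq: "0 \<le> w \<Longrightarrow> w \<le> 1 \<Longrightarrow> V w = (LINT u:{0..w}|lborel. G u)"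
  by (simp add: V_def)
lemma Vi: "set_integrable lborel {0..1} V"
  by (rule borel_integrable_atLeastAtMost') (rule continuous_on_subset[OF V_cont], simp)
lemma W_cont: "continuous_on UNIV W"
  using indef_props(1)[OF Vi] by (simp add: W_def)
lemma W_meas[measurable]: "W \<in> borel_measurable borel"
  using indef_props(6)[OF Vi] by (simp add: W_def)
lemma W_eq: "0 \<le> w \<Longrightarrow> w \<le> 1 \<Longrightarrow> W w = (LINT u:{0..w}|lborel. V u)"
  by (simp add: W_def)

lemma v_eq: "v_fun f x = V (cdf M x)"
proof -
  have "v_fun f x = (\<integral>u. f u * (indicator {..x} u * u) \<partial>lborel)"
    unfolding v_fun_def set_lebesgue_integral_def
    by (intro Bochner_Integration.integral_cong) (auto simp: indicator_def)
  also have "\<dots> = (LINT w:{0<..<1}|lborel. indicator {..x} (G w) * G w)"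
    by (rule transfer(1)) measurable
  also have "\<dots> = (LINT w:{0<..<1}|lborel. indicator {..cdf M x} w * G w)"
    by (rule set_lebesgue_integral_cong) (auto simp: galois indicator_def)
  also have "\<dots> = (LINT w:{0..cdf M x}|lborel. G w)"
    by (rule Ioo_upto) (auto simp: C_range)
  also have "\<dots> = V (cdf M x)" by (simp add: V_eq C_range)
  finally show ?thesis .
qed

lemma q_eq: "q_fun f s = W (cdf M s)"
proof -
  have "q_fun f s = (\<integral>x. f x * (indicator {..s} x * V (cdf M x)) \<partial>lborel)"
    unfolding q_fun_def set_lebesgue_integral_def
    by (intro Bochner_Integration.integral_cong) (auto simp: indicator_def v_eq)
  also have "\<dots> = (LINT w:{0<..<1}|lborel. indicator {..s} (G w) * V (cdf M (G w)))"
    by (rule transfer(1)) measurable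
  also have "\<dots> = (LINT w:{0<..<1}|lborel. indicator {..cdf M s} w * V w)"
    by (rule set_lebesgue_integral_cong) (auto simp: galois indicator_def C_G)
  also have "\<dots> = (LINT w:{0..cdf M s}|lborel. V w)"
    by (rule Ioo_upto) (auto simp: C_range)
  also have "\<dots> = W (cdf M s)" by (simp add: W_eq C_range)
  finally show ?thesis .
qed

lemma int_q2: "(\<integral>s. (q_fun f s)\<^sup>2 * f s \<partial>lborel) = (LINT u:{0..1}|lborel. (W u)\<^sup>2)"
proof -
  have "(\<integral>s. (q_fun f s)\<^sup>2 * f s \<partial>lborel) = (\<integral>s. f s * (W (cdf M s))\<^sup>2 \<partial>lborel)"
    by (simp add: q_eq mult.commute)
  also have "\<dots> = (LINT w:{0<..<1}|lborel. (W (cdf M (G w)))\<^sup>2)"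
    by (rule transfer(1)) measurable
  also have "\<dots> = (LINT w:{0<..<1}|lborel. (W w)\<^sup>2)"
    by (rule set_lebesgue_integral_cong) (auto simp: C_G)
  also have "\<dots> = (LINT u:{0..1}|lborel. (W u)\<^sup>2)" by (rule Ioo_Icc(1)) measurable
  finally show ?thesis .
qed

lemma int_q: "(\<integral>s. q_fun f s * f s \<partial>lborel) = (LINT u:{0..1}|lborel. W u)"
proof -
  have "(\<integral>s. q_fun f s * f s \<partial>lborel) = (\<integral>s. f s * W (cdf M s) \<partial>lborel)"
    by (simp add: q_eq mult.commute)
  also have "\<dots> = (LINT w:{0<..<1}|lborel. W (cdf M (G w)))"
    by (rule transfer(1)) measurable
  also have "\<dots> = (LINT w:{0<..<1}|lborel. W w)"
    by (rule set_lebesgue_integral_cong) (auto simp: C_G)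
  also have "\<dots> = (LINT u:{0..1}|lborel. W u)" by (rule Ioo_Icc(1)) measurable
  finally show ?thesis .
qed

end


lemma arcsine_meas[measurable]: "arcsine_density c \<in> borel_measurable borel"
  unfolding arcsine_density_def[abs_def] by measurable

lemma arcsine_nn: "0 \<le> arcsine_density c x"
proof (cases "- c < x \<and> x < c")
  case True
  then have "0 < (c - x) * (c + x)" by (intro mult_pos_pos) auto
  then have "0 < c\<^sup>2 - x\<^sup>2" by (simp add: power2_eq_square algebra_simps)
  then show ?thesis using True by (simp add: arcsine_density_def)
qed (auto simp: arcsine_density_def)

lemma arcsine_at_g:
  assumes c: "c > 0" and u: "0 < u" "u < 1"
  shows "arcsine_density c (- c * cos (pi * u)) * (c * pi * sin (pi * u)) = 1"
proof -
  have s: "sin (pi * u) > 0" using u by (intro sin_gt_zero) auto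
  have cl: "cos (pi * u) < 1"
  proof -
    have "cos (pi * u) < cos 0" using u by (intro cos_monotone_0_pi) auto
    then show ?thesis by simp
  qed
  have cg: "- 1 < cos (pi * u)"
  proof -
    have "cos pi < cos (pi * u)" using u by (intro cos_monotone_0_pi) auto
    then show ?thesis by simp
  qed
  have in1: "- c < - c * cos (pi * u)" using c cl by (simp add: mult_less_cancel_left_pos)
  have "c * (- cos (pi * u)) < c * 1" using c cg by (intro mult_strict_left_mono) auto
  then have in2: "- c * cos (pi * u) < c" by simp
  have "c\<^sup>2 - (- c * cos (pi * u))\<^sup>2 = c\<^sup>2 * (1 - (cos (pi * u))\<^sup>2)"
    by (simp add: power_mult_distrib algebra_simps)
  also have "\<dots> = (c * sin (pi * u))\<^sup>2" by (simp add: sin_squared_eq power_mult_distrib)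
  finally have "c\<^sup>2 - (- c * cos (pi * u))\<^sup>2 = (c * sin (pi * u))\<^sup>2" .
  then have sq: "sqrt (c\<^sup>2 - (- c * cos (pi * u))\<^sup>2) = c * sin (pi * u)" using c s by simp
  show ?thesis using in1 in2 sq c s by (simp add: arcsine_density_def)
qed


lemma arcsine_distr:
  fixes c :: real
  assumes c: "c > 0"
  shows "distr (restrict_space lborel {0<..<1::real}) borel (\<lambda>u. - c * cos (pi * u)) = density lborel (\<lambda>x. ennreal (arcsine_density c x))"
proof (rule measure_eqI)
  show "sets (distr (restrict_space lborel {0<..<1::real}) borel (\<lambda>u. - c * cos (pi * u))) = sets (density lborel (\<lambda>x. ennreal (arcsine_density c x)))"
    by simp
  fix A assume "A \<in> sets (distr (restrict_space lborel {0<..<1::real}) borel (\<lambda>u. - c * cos (pi * u)))"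
  then have Ab[measurable]: "A \<in> sets borel" by simp
  define g where "g u = - c * cos (pi * u)" for u :: real
  define g' where "g' u = c * pi * sin (pi * u)" for u :: real
  define F where "F x = indicator A x * arcsine_density c x" for x :: real
  have gm[measurable]: "g \<in> borel_measurable borel" unfolding g_def[abs_def] by measurable
  have g0: "g 0 = - c" and g1: "g 1 = c" by (simp_all add: g_def)
  have "emeasure (distr (restrict_space lborel {0<..<1::real}) borel (\<lambda>u. - c * cos (pi * u))) A
      = emeasure (distr (restrict_space lborel {0<..<1::real}) borel g) A" by (simp add: g_def[abs_def])
  also have "\<dots> = emeasure (restrict_space lborel {0<..<1::real}) (g -` A \<inter> space (restrict_space lborel {0<..<1::real}))"
    by (rule emeasure_distr) (auto simp: measurable_restrict_space1 measurable_lborel1)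
  also have "\<dots> = emeasure lborel (g -` A \<inter> {0<..<1})"
    by (subst emeasure_restrict_space) (auto simp: space_restrict_space)
  also have "\<dots> = (\<integral>\<^sup>+u. indicator (g -` A \<inter> {0<..<1}) u \<partial>lborel)"
    by (rule nn_integral_indicator[symmetric]) measurable
  also have "\<dots> = (\<integral>\<^sup>+u. ennreal (F (g u) * g' u * indicator {0..1} u) \<partial>lborel)"
  proof (rule nn_integral_cong)
    fix u :: real
    show "indicator (g -` A \<inter> {0<..<1}) u = ennreal (F (g u) * g' u * indicator {0..1} u)"
    proof (cases "0 < u \<and> u < 1")
      case True
      have "F (g u) * g' u = indicator A (g u)"
        using arcsine_at_g[OF c, of u] True by (simp add: F_def g_def g'_def)
      then show ?thesis using True by (auto simp: indicator_def)
    next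
      case False
      have "F (g u) * g' u * indicator {0..1} u = 0"
      proof (cases "u = 0 \<or> u = 1")
        case True then show ?thesis by (auto simp: F_def g_def arcsine_density_def)
      qed (use False in \<open>auto simp: indicator_def\<close>)
      then show ?thesis using False by (auto simp: indicator_def)
    qed
  qed
  also have "\<dots> = (\<integral>\<^sup>+x. F x * indicator {g 0..g 1} x \<partial>lborel)"
  proof (rule nn_integral_substitution[symmetric])
    show "set_borel_measurable borel {g 0..g 1} F" unfolding set_borel_measurable_def F_def[abs_def] by measurable
    show "(g has_real_derivative g' x) (at x)" for x unfolding g_def[abs_def] g'_def
      by (auto intro!: derivative_eq_intros)
    show "continuous_on {0..1} g'" unfolding g'_def[abs_def] by (intro continuous_intros)
    show "0 \<le> g' x" if "x \<in> {0..1}" for x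
    proof -
      have "0 \<le> pi * x" using that by simp
      moreover have "pi * x \<le> pi * 1" using that by (intro mult_left_mono) auto
      ultimately have "0 \<le> sin (pi * x)" by (intro sin_ge_zero) auto
      then show ?thesis using c by (simp add: g'_def)
    qed
  qed simp
  also have "\<dots> = (\<integral>\<^sup>+x. ennreal (arcsine_density c x) * indicator A x \<partial>lborel)"
    by (rule nn_integral_cong) (auto simp: F_def g0 g1 indicator_def arcsine_density_def)
  also have "\<dots> = emeasure (density lborel (\<lambda>x. ennreal (arcsine_density c x))) A"
    by (rule emeasure_density[symmetric]) auto
  finally show "emeasure (distr (restrict_space lborel {0<..<1::real}) borel (\<lambda>u. - c * cos (pi * u))) A =
      emeasure (density lborel (\<lambda>x. ennreal (arcsine_density c x))) A" .
qed


lemma AE_ex: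
  assumes ae: "AE x in lborel. P x" and ab: "a < (b::real)"
  shows "\<exists>x. a < x \<and> x < b \<and> P x"
proof (rule ccontr)
  assume "\<not> (\<exists>x. a < x \<and> x < b \<and> P x)"
  then have sub: "{a<..<b} \<subseteq> {x. \<not> P x}" by auto
  from ae obtain N where N: "{x \<in> space lborel. \<not> P x} \<subseteq> N" "emeasure lborel N = 0" "N \<in> sets lborel"
    by (auto elim!: AE_E)
  have "emeasure lborel {a<..<b} \<le> emeasure lborel N"
    by (rule emeasure_mono) (use sub N in auto)
  then show False using N ab by simp
qed

context xsetup2
begin

lemma lhs_iff:
  "pi ^ 4 * ((\<integral>s. (q_fun f s)\<^sup>2 * f s \<partial>lborel) - (\<integral>s. q_fun f s * f s \<partial>lborel)\<^sup>2) = var_f f \<longleftrightarrow>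
   pi ^ 4 * ((LINT u:{0..1}|lborel. (W u)\<^sup>2) - (LINT u:{0..1}|lborel. W u)\<^sup>2) = (LINT u:{0..1}|lborel. (G u)\<^sup>2)"
  by (simp add: int_q2 int_q var_eq)

lemma forward:
  assumes varpos: "var_f f > 0"
    and eq: "pi ^ 4 * ((LINT u:{0..1}|lborel. (W u)\<^sup>2) - (LINT u:{0..1}|lborel. W u)\<^sup>2) = (LINT u:{0..1}|lborel. (G u)\<^sup>2)"
  shows "\<exists>c>0. AE x in lborel. f x = arcsine_density c x"
proof -
  obtain k where k: "AE u in lborel. u \<in> {0<..<1} \<longrightarrow> G u = k * cos (pi * u)"
    using uspace(2)[OF G_meas G1 G2 G_leftcont G0] eq unfolding W_def V_def by blast
  have k0: "k \<noteq> 0"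
  proof
    assume k0: "k = 0"
    have ae: "AE x in lborel. indicator {0..1} x *\<^sub>R (G x)\<^sup>2 = (0::real)"
      using k endpt_AE by eventually_elim (use k0 in \<open>auto simp: indicator_def\<close>)
    have "(LINT u:{0..1}|lborel. (G u)\<^sup>2) = integral\<^sup>L lborel (\<lambda>x::real. 0::real)"
      unfolding set_lebesgue_integral_def by (rule integral_cong_AE[OF _ _ ae]) (auto simp: measurable_lborel1)
    then show False using varpos var_eq by simp
  qed
  have kneg: "\<not> k > 0"
  proof
    assume kp: "k > 0"
    obtain u1 where u1: "0 < u1" "u1 < 1/3" "u1 \<in> {0<..<1} \<longrightarrow> G u1 = k * cos (pi * u1)"
      using AE_ex[OF k, of 0 "1/3"] by auto
    obtain u2 where u2: "2/3 < u2" "u2 < 1" "u2 \<in> {0<..<1} \<longrightarrow> G u2 = k * cos (pi * u2)"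
      using AE_ex[OF k, of "2/3" 1] by auto
    have "cos (pi * u2) < cos (pi * u1)"
      using u1 u2 by (intro cos_monotone_0_pi) auto
    then have "k * cos (pi * u2) < k * cos (pi * u1)" using kp by simp
    moreover have "G u1 \<le> G u2" using u1 u2 by (intro G_mono) auto
    ultimately show False using u1 u2 by auto
  qed
  define c where "c = - k"
  have c: "c > 0" using k0 kneg by (simp add: c_def)
  have kc: "AE u in lborel. u \<in> {0<..<1} \<longrightarrow> G u = - c * cos (pi * u)"
    using k by (simp add: c_def)
  have "M = distr U borel G" by (simp add: distr_G)
  also have "\<dots> = distr U borel (\<lambda>u. - c * cos (pi * u))"
  proof (rule distr_cong_AE)
    show "AE x in U. G x = - c * cos (pi * x)"
      unfolding U_def using kc by (subst AE_restrict_space_iff) auto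
    show "G \<in> measurable U borel" by (rule G_meas_U)
    show "(\<lambda>u. - c * cos (pi * u)) \<in> measurable U borel"
      unfolding U_def by (rule measurable_restrict_space1) (simp add: measurable_lborel1)
  qed auto
  also have "\<dots> = density lborel (\<lambda>x. ennreal (arcsine_density c x))"
    unfolding U_def by (rule arcsine_distr[OF c])
  finally have "density lborel (\<lambda>x. ennreal (f x)) = density lborel (\<lambda>x. ennreal (arcsine_density c x))"
    by (simp add: M_def)
  then have "AE x in lborel. ennreal (f x) = ennreal (arcsine_density c x)"
    by (subst (asm) sigma_finite_measure.density_unique_iff[OF sigma_finite_lborel]) (auto simp: measurable_lborel1)
  then have "AE x in lborel. f x = arcsine_density c x"
    by eventually_elim (simp add: f_nn arcsine_nn)
  then show ?thesis using c by blast
qed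


lemma backward:
  assumes c: "c > 0" and ae: "AE x in lborel. f x = arcsine_density c x"
  shows "pi ^ 4 * ((LINT u:{0..1}|lborel. (W u)\<^sup>2) - (LINT u:{0..1}|lborel. W u)\<^sup>2) = (LINT u:{0..1}|lborel. (G u)\<^sup>2)"
proof -
  define g where "g u = - c * cos (pi * u)" for u :: real
  have gm[measurable]: "g \<in> borel_measurable borel" unfolding g_def[abs_def] by measurable
  have "M = density lborel (\<lambda>x. ennreal (arcsine_density c x))"
    unfolding M_def by (rule density_cong) (use ae in \<open>auto simp: measurable_lborel1\<close>)
  also have "\<dots> = distr U borel g"
    unfolding U_def g_def[abs_def] by (rule arcsine_distr[OF c, symmetric])
  finally have Mg: "M = distr U borel g" .
  have gmono: "g w \<le> g u \<longleftrightarrow> w \<le> u" if "w \<in> {0..1}" "u \<in> {0..1}" for w u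
  proof -
    have "g w \<le> g u \<longleftrightarrow> cos (pi * u) \<le> cos (pi * w)" using c by (simp add: g_def)
    also have "\<dots> \<longleftrightarrow> pi * w \<le> pi * u"
      using that by (intro cos_mono_le_eq) (auto intro: mult_left_le)
    also have "\<dots> \<longleftrightarrow> w \<le> u" by simp
    finally show ?thesis .
  qed
  have Cg: "cdf M (g u) = u" if u: "0 \<le> u" "u < 1" for u
  proof -
    have "cdf M (g u) = measure (distr U borel g) {..g u}" by (simp add: cdf_def Mg)
    also have "\<dots> = measure U (g -` {..g u} \<inter> space U)"
      by (rule measure_distr) (auto simp: U_def measurable_restrict_space1 measurable_lborel1)
    also have "g -` {..g u} \<inter> space U = {0<..u}"
      using gmono u by (auto simp: U_def space_restrict_space)
    also have "measure U {0<..u} = measure lborel {0<..u}"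
      unfolding U_def by (rule measure_restrict_space) (use u in auto)
    also have "\<dots> = u" using u by simp
    finally show ?thesis .
  qed
  have Gg: "G u = g u" if u: "u \<in> {0<..<1}" for u
  proof (rule antisym)
    show "G u \<le> g u" using galois[OF u, of "g u"] Cg[of u] u by simp
    show "g u \<le> G u"
    proof (rule ccontr)
      assume "\<not> g u \<le> G u"
      then have lt: "G u < g u" by simp
      have uC: "u \<le> cdf M (G u)" using galois[OF u, of "G u"] by simp
      show False
      proof (cases "G u \<le> - c")
        case True
        have "cdf M (G u) \<le> cdf M (g 0)" using True by (intro cd.cdf_nondecreasing) (simp add: g_def)
        also have "\<dots> = 0" using Cg[of 0] by simp
        finally show False using uC u by simp
      next
        case False
        have "\<exists>w\<ge>0. w \<le> u \<and> g w = G u"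
          using IVT[of g 0 "G u" u] lt False u unfolding g_def by (auto intro!: continuous_intros)
        then obtain w where w: "0 \<le> w" "w \<le> u" "g w = G u" by blast
        have "w \<noteq> u" using w lt by auto
        then have "cdf M (G u) = w" using Cg[of w] w u by auto
        then show False using uC w \<open>w \<noteq> u\<close> by simp
      qed
    qed
  qed
  have "pi ^ 4 * ((LINT u:{0..1}|lborel. (W u)\<^sup>2) - (LINT u:{0..1}|lborel. W u)\<^sup>2) = (LINT u:{0..1}|lborel. (G u)\<^sup>2)"
    unfolding W_def V_def by (rule uspace_arcsine[OF G_meas, where c=c]) (simp add: Gg g_def)
  then show ?thesis .
qed

end

theorem mainTheorem4:
  fixes f :: "real \<Rightarrow> real"
  assumes dens: "prob_density f"
    and symm: "symmetric_fun f"
    and finvar: "integrable lborel (\<lambda>x. x\<^sup>2 * f x)"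
    and varpos: "var_f f > 0"
  shows "pi ^ 4 * ((\<integral>s. (q_fun f s)\<^sup>2 * f s \<partial>lborel) - (\<integral>s. q_fun f s * f s \<partial>lborel)\<^sup>2) = var_f f
         \<longleftrightarrow> (\<exists>c>0. AE x in lborel. f x = arcsine_density c x)"
proof -
  interpret X: xsetup2 f
    by unfold_locales (rule dens symm finvar)+
  show ?thesis
  proof
    assume "pi ^ 4 * ((\<integral>s. (q_fun f s)\<^sup>2 * f s \<partial>lborel) - (\<integral>s. q_fun f s * f s \<partial>lborel)\<^sup>2) = var_f f"
    then show "\<exists>c>0. AE x in lborel. f x = arcsine_density c x"
      using X.lhs_iff X.forward[OF varpos] by simp
  next
    assume "\<exists>c>0. AE x in lborel. f x = arcsine_density c x"
    then obtain c where c: "c > 0" "AE x in lborel. f x = arcsine_density c x" by blast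
    show "pi ^ 4 * ((\<integral>s. (q_fun f s)\<^sup>2 * f s \<partial>lborel) - (\<integral>s. q_fun f s * f s \<partial>lborel)\<^sup>2) = var_f f"
      using X.lhs_iff X.backward[OF c] by simp
  qed
qed

end
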